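(* Let $\Sigma=\{a\}$. For $n\ge0$ let $P_{2n}$ be the pomset with events $e_1,\dots,e_{2n}$ all labelled $a$, precedence $e_i<e_j$ iff $j\ge i+2$, event order $e_i\dashrightarrow e_{i+1}$ and $e_{i+2}\dashrightarrow e_{i+1}$ for odd $i$ (whenever these events exist), i.e. each odd-indexed event is $\dashrightarrow$-before its concurrent even-indexed neighbours, and empty source and target interfaces ($P_0$ is the empty pomset). Then the language $\{P_{2n}\mid n\ge0\}$ is recognized by a finite aperiodic category: there exist a finite category $\mathcal C$ and $N\in\mathbb N$ with $x^{N+1}=x^N$ for every endomorphism $x$ of $\mathcal C$, $K\subseteq\mathrm{Mor}(\mathcal C)$ and a functor $F:\mathrm{iiPoms}\to\mathcal C$ with $\{P_{2n}\mid n\ge0\}=F^{-1}(K)$.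
   Context: Pomsets $(P,<,\dashrightarrow,\lambda,S,T)$ over $\Sigma$: $P$ finite, $<$ a strict partial interval order, $\dashrightarrow$ acyclic relating (in one direction) distinct $<$-incomparable elements, $\lambda:P\to\Sigma$, $S$/$T$ sets of $<$-minimal/maximal elements viewed as conclists (finite sets with strict total order and labelling); up to isomorphism. $\mathrm{iiPoms}$: category with objects conclists, morphisms $U\to V$ pomsets with source $U$, target $V$, composition the gluing $P*Q$ (identify $T_P$ with $S_Q$; precedence $<_P\cup<_Q\cup(P\setminus T_P)\times(Q\setminus S_Q)$; event orders and labels united; source $S_P$, target $T_Q$), identities $\mathrm{id}_U=(U,\emptyset,\dashrightarrow,\lambda,U,U)$. *)

theory Defs
  imports Main
begin

text \<open>Events are natural numbers; objects and morphisms of iiPoms are isomorphism classes,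
  represented here by concrete representatives together with invariance under isomorphism.\<close>

record 'a conclist =
  cl_car :: "nat set"
  cl_ord :: "(nat \<times> nat) set"
  cl_lab :: "nat \<Rightarrow> 'a"

record 'a ipomset =
  pcar :: "nat set"
  plt  :: "(nat \<times> nat) set"
  pev  :: "(nat \<times> nat) set"
  plab :: "nat \<Rightarrow> 'a"
  psrc :: "nat set"
  ptgt :: "nat set"

definition is_conclist :: "'a conclist \<Rightarrow> bool" where
  "is_conclist U \<longleftrightarrow> finite (cl_car U) \<and> cl_ord U \<subseteq> cl_car U \<times> cl_car U
     \<and> irrefl (cl_ord U) \<and> trans (cl_ord U)
     \<and> (\<forall>x\<in>cl_car U. \<forall>y\<in>cl_car U. x \<noteq> y \<longrightarrow> (x,y) \<in> cl_ord U \<or> (y,x) \<in> cl_ord U)"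

definition conclist_iso :: "'a conclist \<Rightarrow> 'a conclist \<Rightarrow> bool" where
  "conclist_iso U V \<longleftrightarrow> (\<exists>f. bij_betw f (cl_car U) (cl_car V)
     \<and> (\<forall>x\<in>cl_car U. cl_lab V (f x) = cl_lab U x)
     \<and> (\<forall>x\<in>cl_car U. \<forall>y\<in>cl_car U. (f x, f y) \<in> cl_ord V \<longleftrightarrow> (x,y) \<in> cl_ord U))"

definition is_ipomset :: "'a ipomset \<Rightarrow> bool" where
  "is_ipomset P \<longleftrightarrow> finite (pcar P)
     \<and> plt P \<subseteq> pcar P \<times> pcar P \<and> pev P \<subseteq> pcar P \<times> pcar P
     \<and> irrefl (plt P) \<and> trans (plt P)
     \<and> (\<forall>a b c d. (a,b) \<in> plt P \<and> (c,d) \<in> plt P \<longrightarrow> (a,d) \<in> plt P \<or> (c,b) \<in> plt P)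
     \<and> acyclic (pev P)
     \<and> (\<forall>x y. (x,y) \<in> pev P \<longrightarrow> (x,y) \<notin> plt P \<and> (y,x) \<notin> plt P)
     \<and> (\<forall>x\<in>pcar P. \<forall>y\<in>pcar P. x \<noteq> y \<and> (x,y) \<notin> plt P \<and> (y,x) \<notin> plt P
          \<longrightarrow> (x,y) \<in> pev P \<or> (y,x) \<in> pev P)
     \<and> psrc P \<subseteq> pcar P \<and> ptgt P \<subseteq> pcar P
     \<and> (\<forall>x\<in>psrc P. \<forall>y. (y,x) \<notin> plt P)
     \<and> (\<forall>x\<in>ptgt P. \<forall>y. (x,y) \<notin> plt P)"

definition ipomset_iso :: "'a ipomset \<Rightarrow> 'a ipomset \<Rightarrow> bool" where
  "ipomset_iso P Q \<longleftrightarrow> (\<exists>f. bij_betw f (pcar P) (pcar Q)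
     \<and> (\<forall>x\<in>pcar P. plab Q (f x) = plab P x)
     \<and> (\<forall>x\<in>pcar P. \<forall>y\<in>pcar P. (f x, f y) \<in> plt Q \<longleftrightarrow> (x,y) \<in> plt P)
     \<and> (\<forall>x\<in>pcar P. \<forall>y\<in>pcar P. (f x, f y) \<in> pev Q \<longleftrightarrow> (x,y) \<in> pev P)
     \<and> f ` psrc P = psrc Q \<and> f ` ptgt P = ptgt Q)"

definition src_cl :: "'a ipomset \<Rightarrow> 'a conclist" where
  "src_cl P = \<lparr>cl_car = psrc P, cl_ord = pev P \<inter> (psrc P \<times> psrc P), cl_lab = plab P\<rparr>"

definition tgt_cl :: "'a ipomset \<Rightarrow> 'a conclist" where
  "tgt_cl P = \<lparr>cl_car = ptgt P, cl_ord = pev P \<inter> (ptgt P \<times> ptgt P), cl_lab = plab P\<rparr>"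

definition id_pom :: "'a conclist \<Rightarrow> 'a ipomset" where
  "id_pom U = \<lparr>pcar = cl_car U, plt = {}, pev = cl_ord U, plab = cl_lab U,
               psrc = cl_car U, ptgt = cl_car U\<rparr>"

text \<open>R is (a representative of) the gluing P * Q: embeddings i, j of P and Q into R,
  jointly covering R, overlapping exactly in i(T_P) = j(S_Q), where the identification
  T_P ~ S_Q is an isomorphism of conclists; precedence, event order, labels and interfaces
  as in the definition of gluing.\<close>

definition is_gluing :: "'a ipomset \<Rightarrow> 'a ipomset \<Rightarrow> 'a ipomset \<Rightarrow> bool" where
  "is_gluing P Q R \<longleftrightarrow> (\<exists>i j. inj_on i (pcar P) \<and> inj_on j (pcar Q)
     \<and> pcar R = i ` pcar P \<union> j ` pcar Q
     \<and> i ` pcar P \<inter> j ` pcar Q = i ` ptgt P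
     \<and> i ` ptgt P = j ` psrc Q
     \<and> (\<forall>x\<in>ptgt P. \<forall>y\<in>ptgt P. \<forall>x'\<in>psrc Q. \<forall>y'\<in>psrc Q.
          i x = j x' \<longrightarrow> i y = j y' \<longrightarrow> ((x,y) \<in> pev P \<longleftrightarrow> (x',y') \<in> pev Q))
     \<and> (\<forall>x\<in>pcar P. plab R (i x) = plab P x)
     \<and> (\<forall>y\<in>pcar Q. plab R (j y) = plab Q y)
     \<and> plt R = (\<lambda>(x,y). (i x, i y)) ` plt P \<union> (\<lambda>(x,y). (j x, j y)) ` plt Q
              \<union> {(i x, j y) | x y. x \<in> pcar P - ptgt P \<and> y \<in> pcar Q - psrc Q}
     \<and> pev R = (\<lambda>(x,y). (i x, i y)) ` pev P \<union> (\<lambda>(x,y). (j x, j y)) ` pev Q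
     \<and> psrc R = i ` psrc P \<and> ptgt R = j ` ptgt Q)"

record fcat =
  Ob :: "nat set"
  Mor :: "nat set"
  cdom :: "nat \<Rightarrow> nat"
  ccod :: "nat \<Rightarrow> nat"
  cid :: "nat \<Rightarrow> nat"
  ccomp :: "nat \<Rightarrow> nat \<Rightarrow> nat"  \<comment> \<open>diagrammatic: ccomp f g = first f, then g\<close>

definition finite_category :: "fcat \<Rightarrow> bool" where
  "finite_category C \<longleftrightarrow> finite (Ob C) \<and> finite (Mor C)
     \<and> (\<forall>f\<in>Mor C. cdom C f \<in> Ob C \<and> ccod C f \<in> Ob C)
     \<and> (\<forall>x\<in>Ob C. cid C x \<in> Mor C \<and> cdom C (cid C x) = x \<and> ccod C (cid C x) = x)
     \<and> (\<forall>f\<in>Mor C. \<forall>g\<in>Mor C. ccod C f = cdom C g \<longrightarrow>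
          ccomp C f g \<in> Mor C \<and> cdom C (ccomp C f g) = cdom C f \<and> ccod C (ccomp C f g) = ccod C g)
     \<and> (\<forall>f\<in>Mor C. ccomp C (cid C (cdom C f)) f = f \<and> ccomp C f (cid C (ccod C f)) = f)
     \<and> (\<forall>f\<in>Mor C. \<forall>g\<in>Mor C. \<forall>h\<in>Mor C. ccod C f = cdom C g \<longrightarrow> ccod C g = cdom C h \<longrightarrow>
          ccomp C (ccomp C f g) h = ccomp C f (ccomp C g h))"

fun cpow :: "fcat \<Rightarrow> nat \<Rightarrow> nat \<Rightarrow> nat" where
  "cpow C x 0 = cid C (cdom C x)"
| "cpow C x (Suc n) = ccomp C (cpow C x n) x"

definition aperiodic_cat :: "fcat \<Rightarrow> nat \<Rightarrow> bool" where
  "aperiodic_cat C N \<longleftrightarrow> (\<forall>x\<in>Mor C. cdom C x = ccod C x \<longrightarrow> cpow C x (N+1) = cpow C x N)"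

definition iiPoms_functor :: "fcat \<Rightarrow> ('a conclist \<Rightarrow> nat) \<Rightarrow> ('a ipomset \<Rightarrow> nat) \<Rightarrow> bool" where
  "iiPoms_functor C Fo Fm \<longleftrightarrow>
     (\<forall>U V. is_conclist U \<and> is_conclist V \<and> conclist_iso U V \<longrightarrow> Fo U = Fo V)
   \<and> (\<forall>P Q. is_ipomset P \<and> is_ipomset Q \<and> ipomset_iso P Q \<longrightarrow> Fm P = Fm Q)
   \<and> (\<forall>U. is_conclist U \<longrightarrow> Fo U \<in> Ob C)
   \<and> (\<forall>P. is_ipomset P \<longrightarrow> Fm P \<in> Mor C \<and> cdom C (Fm P) = Fo (src_cl P)
                              \<and> ccod C (Fm P) = Fo (tgt_cl P))
   \<and> (\<forall>U. is_conclist U \<longrightarrow> Fm (id_pom U) = cid C (Fo U))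
   \<and> (\<forall>P Q R. is_ipomset P \<and> is_ipomset Q \<and> is_ipomset R \<and> is_gluing P Q R
              \<longrightarrow> Fm R = ccomp C (Fm P) (Fm Q))"

definition P2n :: "nat \<Rightarrow> unit ipomset" where
  "P2n n = \<lparr>pcar = {1..2*n},
            plt = {(i,j). i \<in> {1..2*n} \<and> j \<in> {1..2*n} \<and> i + 2 \<le> j},
            pev = {(i, i+1) | i. odd i \<and> i + 1 \<le> 2*n} \<union> {(i+2, i+1) | i. odd i \<and> i + 2 \<le> 2*n},
            plab = (\<lambda>_. ()),
            psrc = {}, ptgt = {}\<rparr>"

end

theory Submission
  imports Defs "HOL-Library.Nat_Bijection"
begin

datatype st = SB | SS2 | SM1 bool | SM2 bool | SE1 | SE

fun ok :: "st \<Rightarrow> int \<Rightarrow> bool" where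
  "ok SB k = (k = 1)"
| "ok SS2 k = (k = 1)"
| "ok (SM1 b) k = (1 \<le> k \<and> (odd k \<longleftrightarrow> b))"
| "ok (SM2 b) k = (1 \<le> k \<and> (odd k \<longleftrightarrow> b))"
| "ok SE1 k = (1 \<le> k \<and> odd k)"
| "ok SE k = (1 \<le> k \<and> odd k)"

fun Lf :: "st \<Rightarrow> int \<Rightarrow> int set" where
  "Lf SE1 k = {..<k} \<union> {k+1}"
| "Lf SB k = {..<k}"
| "Lf SS2 k = {..<k}"
| "Lf (SM1 b) k = {..<k}"
| "Lf (SM2 b) k = {..<k}"
| "Lf SE k = {..<k}"

fun Ic :: "st \<Rightarrow> int \<Rightarrow> int set" where
  "Ic SB k = {}"
| "Ic SS2 k = {k+1}"
| "Ic (SM1 b) k = {k}"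
| "Ic (SM2 b) k = {k, k+1}"
| "Ic SE1 k = {k}"
| "Ic SE k = {}"

definition Seg :: "st \<Rightarrow> int \<Rightarrow> st \<Rightarrow> int \<Rightarrow> int set" where
  "Seg s k s' k' = (Lf s' k' \<union> Ic s' k') - Lf s k"

definition restr :: "st \<Rightarrow> int \<Rightarrow> st \<Rightarrow> int \<Rightarrow> bool" where
  "restr s k s' k' \<longleftrightarrow> (s = SE \<longrightarrow> s' = SE \<and> k' = k)
     \<and> (s = SE1 \<longrightarrow> (s' = SE1 \<and> k' = k) \<or> (s' = SE \<and> k' = k + 2))
     \<and> (s = SB \<and> s' = SE \<longrightarrow> 3 \<le> k')"

definition LI :: "st \<Rightarrow> int \<Rightarrow> int set" where
  "LI s k = Lf s k \<union> Ic s k"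

definition tr :: "st \<Rightarrow> int \<Rightarrow> st \<Rightarrow> int \<Rightarrow> bool" where
  "tr s k s' k' \<longleftrightarrow> ok s k \<and> ok s' k' \<and> Lf s k \<subseteq> Lf s' k'
     \<and> LI s k \<subseteq> LI s' k' \<and> restr s k s' k'"

lemma Seg_LI: "Seg s k s' k' = LI s' k' - Lf s k"
  by (simp add: Seg_def LI_def)

lemma LfIc_disj: "Lf s k \<inter> Ic s k = {}"
  by (cases s) auto

lemma Lf_lower: "{..<k} \<subseteq> Lf s k"
  by (cases s) auto

lemma k_notin_Lf: "k \<notin> Lf s k"
  by (cases s) auto

lemma LI_simps[simp]:
  "LI SB k = {..<k}" "LI SS2 k = {..<k} \<union> {k+1}" "LI (SM1 b) k = {..k}"
  "LI (SM2 b) k = {..k+1}" "LI SE1 k = {..k+1}" "LI SE k = {..<k}"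
  by (auto simp: LI_def)

lemma int_sub_iffs[simp]:
  "{..(a::int)} \<subseteq> {..<b} \<longleftrightarrow> a < b"
  "{..<(a::int)} \<subseteq> {..b} \<longleftrightarrow> a \<le> b + 1"
proof -
  show "{..(a::int)} \<subseteq> {..<b} \<longleftrightarrow> a < b" by auto
  show "{..<(a::int)} \<subseteq> {..b} \<longleftrightarrow> a \<le> b + 1"
  proof
    assume h: "{..<a} \<subseteq> {..b}" then have "a - 1 \<in> {..b}" using subsetD[OF h, of "a - 1"] by auto
    then show "a \<le> b + 1" by auto
  qed auto
qed

lemma atMost_eq_lessThan_int[simp]: "{..(a::int)} = {..<b} \<longleftrightarrow> b = a + 1"
proof
  assume h: "{..a} = {..<b}"
  have "a \<in> {..<b}" using h by (metis atMost_iff order_refl)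
  moreover have "b \<notin> {..a}" using h by auto
  moreover have "a + 1 \<notin> {..<b}" using h[symmetric] by auto
  ultimately show "b = a + 1" by auto
qed auto

lemma ok_ge1: "ok s k \<Longrightarrow> 1 \<le> k"
  by (cases s) auto

lemma tr_le: "tr s k s' k' \<Longrightarrow> k \<le> k'"
proof (rule ccontr)
  assume "tr s k s' k'" "\<not> k \<le> k'"
  then have "k' \<in> Lf s k" using Lf_lower[of k s] by auto
  then have "k' \<in> Lf s' k'" using \<open>tr s k s' k'\<close> unfolding tr_def by auto
  then show False using k_notin_Lf by blast
qed

lemma LI_down: "x \<in> LI s k \<Longrightarrow> y \<le> x \<Longrightarrow> s \<noteq> SS2 \<Longrightarrow> y \<in> LI s k"
  by (cases s) auto

lemma LI_top: "x \<in> LI s k \<Longrightarrow> x \<le> k + 1"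
  by (cases s) auto

lemma Seg_ge: "x \<in> Seg s k s' k' \<Longrightarrow> k \<le> x"
  using Lf_lower[of k s] unfolding Seg_LI by force

lemma tr_trans:
  assumes "tr s k s' k'" "tr s' k' s'' k''"
  shows "tr s k s'' k''"
proof -
  have r: "restr s k s'' k''"
  proof -
    have a: "restr s k s' k'" "restr s' k' s'' k''" "ok s' k'" "ok s'' k''" "LI s' k' \<subseteq> LI s'' k''"
      using assms unfolding tr_def by auto
    show ?thesis
    proof (cases s)
      case SB
      show ?thesis
      proof (cases s')
        case SS2 then show ?thesis using a SB by (auto simp: restr_def)
      next
        case (SM1 b) then show ?thesis using a SB by (auto simp: restr_def; presburger)
      next
        case (SM2 b) then show ?thesis using a SB by (auto simp: restr_def; presburger)
      qed (use a SB in \<open>auto simp: restr_def\<close>)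
    qed (use a in \<open>auto simp: restr_def\<close>)
  qed
  then show ?thesis using assms unfolding tr_def by blast
qed

lemma Seg_union:
  assumes "tr s k s' k'" "tr s' k' s'' k''"
  shows "Seg s k s'' k'' = Seg s k s' k' \<union> Seg s' k' s'' k''"
  using assms LfIc_disj[of s' k'] unfolding tr_def Seg_LI LI_def by blast

lemma Seg_inter:
  assumes "tr s k s' k'" "tr s' k' s'' k''"
  shows "Seg s k s' k' \<inter> Seg s' k' s'' k'' = Ic s' k'"
  using assms LfIc_disj[of s' k'] LfIc_disj[of s k] unfolding tr_def Seg_LI LI_def by blast

lemma Ic_Seg1: "tr s k s' k' \<Longrightarrow> Ic s k \<subseteq> Seg s k s' k'"
  using LfIc_disj[of s k] unfolding tr_def Seg_LI LI_def by blast

lemma Ic_Seg2: "tr s k s' k' \<Longrightarrow> Ic s' k' \<subseteq> Seg s k s' k'"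
  using LfIc_disj[of s' k'] unfolding tr_def Seg_LI LI_def by blast

lemma sep:
  assumes "tr s k s' k'" "tr s' k' s'' k''"
    and "a \<in> Seg s k s' k' - Ic s' k'" "c \<in> Seg s' k' s'' k'' - Ic s' k'"
  shows "a + 2 \<le> c"
proof -
  have a: "a \<in> Lf s' k'" "a \<notin> Lf s k" "c \<notin> LI s' k'" "c \<in> LI s'' k''"
    using assms(3,4) unfolding Seg_LI LI_def by auto
  have t: "ok s k" "ok s' k'" "Lf s k \<subseteq> Lf s' k'" "restr s' k' s'' k''" "LI s' k' \<subseteq> LI s'' k''"
    "k \<le> k'"
    using assms(1,2) tr_le[OF assms(1)] unfolding tr_def by auto
  have k1: "1 \<le> k" using ok_ge1 t(1) .
  show ?thesis
  proof (cases s')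
    case SB then show ?thesis using a t k1 Lf_lower[of k s] by auto
  next
    case SS2 then show ?thesis using a t k1 Lf_lower[of k s] by auto
  next
    case (SM1 b) then show ?thesis using a t by auto
  next
    case (SM2 b) then show ?thesis using a t by auto
  next
    case SE1 then show ?thesis using a t by (auto simp: restr_def)
  next
    case SE then show ?thesis using a t by (auto simp: restr_def)
  qed
qed

lemma Lf_shift: "Lf s (k + d) = {x. x - d \<in> Lf s k}"
  by (cases s) auto

lemma Ic_shift: "Ic s (k + d) = {x. x - d \<in> Ic s k}"
  by (cases s) auto

lemma LI_shift: "LI s (k + d) = {x. x - d \<in> LI s k}"
  unfolding LI_def Lf_shift Ic_shift by auto

lemma Seg_shift: "Seg s (k + d) s' (k' + d) = {x. x - d \<in> Seg s k s' k'}"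
  unfolding Seg_LI LI_shift Lf_shift by auto

lemma one_in_LI: "ok s k \<Longrightarrow> s \<noteq> SB \<Longrightarrow> s \<noteq> SS2 \<Longrightarrow> s \<noteq> SE \<Longrightarrow> 1 \<in> LI s k"
  by (cases s) auto

lemma tr_to_SB: "tr s k s' k' \<Longrightarrow> s' = SB \<or> s' = SS2 \<Longrightarrow> s = SB \<or> s = SS2"
proof (rule ccontr)
  assume a: "tr s k s' k'" "s' = SB \<or> s' = SS2" "\<not> (s = SB \<or> s = SS2)"
  have "s \<noteq> SE" using a unfolding tr_def restr_def by auto
  then have "1 \<in> LI s k" using one_in_LI a unfolding tr_def by auto
  then have "1 \<in> LI s' k'" using a unfolding tr_def by auto
  then show False using a(2) a(1) unfolding tr_def by auto
qed

lemma tr_shift: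
  assumes "tr s k s' k'" "even d" "1 \<le> k + d" "s = SB \<or> s = SS2 \<longrightarrow> d = 0"
  shows "tr s (k + d) s' (k' + d)"
proof (cases "d = 0")
  case True then show ?thesis using assms by simp
next
  case False
  have ns: "s \<noteq> SB" "s \<noteq> SS2" using False assms(4) by auto
  have ns': "s' \<noteq> SB" "s' \<noteq> SS2" using tr_to_SB[OF assms(1)] ns by auto
  have kk: "k \<le> k'" using tr_le[OF assms(1)] .
  have ok1: "ok s k" "ok s' k'" using assms(1) unfolding tr_def by auto
  have o1: "ok s (k + d)" using ok1(1) assms(2,3) ns by (cases s) (auto simp: even_add)
  have o2: "ok s' (k' + d)" using ok1(2) assms(2,3) ns' kk by (cases s') (auto simp: even_add)
  have i1: "Lf s (k + d) \<subseteq> Lf s' (k' + d)" "LI s (k + d) \<subseteq> LI s' (k' + d)"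
    using assms(1) unfolding tr_def Lf_shift LI_shift by auto
  have r: "restr s (k + d) s' (k' + d)"
    using assms(1) ns unfolding tr_def restr_def by auto
  show ?thesis using o1 o2 i1 r unfolding tr_def by auto
qed

lemma split_finish:
  assumes T: "tr s k s'' k4" and U: "Seg s k s'' k4 = A \<union> I \<union> C"
    and D: "A \<inter> I = {}" "A \<inter> C = {}" "I \<inter> C = {}"
    and S1: "Ic s k \<subseteq> A \<union> I" and S2: "Ic s'' k4 \<subseteq> I \<union> C"
    and o: "ok s' k'" and L: "Lf s' k' = Lf s k \<union> A" and Ieq: "Ic s' k' = I"
    and r1: "restr s k s' k'" and r2: "restr s' k' s'' k4"
  shows "tr s k s' k' \<and> tr s' k' s'' k4 \<and> Ic s' k' = I \<and> Seg s k s' k' = A \<union> I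
     \<and> Seg s' k' s'' k4 = I \<union> C"
proof -
  have t: "ok s k" "ok s'' k4" "Lf s k \<subseteq> Lf s'' k4" "LI s k \<subseteq> LI s'' k4"
    using T unfolding tr_def by auto
  have U': "LI s'' k4 - Lf s k = A \<union> I \<union> C" using U unfolding Seg_LI .
  have d1: "Lf s k \<inter> Ic s k = {}" "Lf s'' k4 \<inter> Ic s'' k4 = {}" using LfIc_disj by auto
  have "Lf s k \<subseteq> LI s'' k4" using t(4) unfolding LI_def by auto
  then have LIe: "LI s'' k4 = Lf s k \<union> A \<union> I \<union> C" and dj: "Lf s k \<inter> (A \<union> I \<union> C) = {}"
    using U' by auto
  have A2: "A \<subseteq> Lf s'' k4" using LIe S2 D unfolding LI_def by blast
  have tr1: "tr s k s' k'" unfolding tr_def LI_def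
    using t o r1 L Ieq S1 by blast
  have tr2: "tr s' k' s'' k4" unfolding tr_def LI_def
    using t o r2 L Ieq A2 LIe unfolding LI_def by blast
  have sg1: "Seg s k s' k' = A \<union> I" unfolding Seg_LI LI_def L Ieq using dj by blast
  have sg2: "Seg s' k' s'' k4 = I \<union> C" unfolding Seg_LI L using LIe dj D by blast
  show ?thesis using tr1 tr2 Ieq sg1 sg2 by blast
qed

lemma Seg_mem: "x \<in> Seg s k s' k' \<longleftrightarrow> x \<in> LI s' k' \<and> x \<notin> Lf s k"
  unfolding Seg_LI by auto

lemma Lf_cases: "Lf s k = {..<k} \<or> (s = SE1 \<and> Lf s k = {..<k} \<union> {k+1})"
  by (cases s) auto

context
  fixes s k s'' k4 A I C
  assumes T: "tr s k s'' k4" and U: "Seg s k s'' k4 = A \<union> I \<union> C"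
    and D1: "A \<inter> I = {}" and D2: "A \<inter> C = {}" and D3: "I \<inter> C = {}"
    and sp: "\<forall>a\<in>A. \<forall>c\<in>C. a + 2 \<le> c"
    and anti: "\<forall>x\<in>I. \<forall>y\<in>I. \<not> x + 2 \<le> y"
    and mx: "\<forall>x\<in>I. \<forall>a\<in>A. \<not> x + 2 \<le> a"
    and mn: "\<forall>x\<in>I. \<forall>c\<in>C. \<not> c + 2 \<le> x"
    and S1: "Ic s k \<subseteq> A \<union> I" and S2: "Ic s'' k4 \<subseteq> I \<union> C"
begin

lemma fin: "ok s' k' \<Longrightarrow> Lf s' k' = Lf s k \<union> A \<Longrightarrow> Ic s' k' = I \<Longrightarrow> restr s k s' k'
   \<Longrightarrow> restr s' k' s'' k4 \<Longrightarrow> \<exists>s' k'. tr s k s' k' \<and> tr s' k' s'' k4 \<and> Ic s' k' = I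
     \<and> Seg s k s' k' = A \<union> I \<and> Seg s' k' s'' k4 = I \<union> C"
  using split_finish[OF T U D1 D2 D3 S1 S2] by blast

lemma tk: "ok s k" "ok s'' k4" "Lf s k \<subseteq> Lf s'' k4" "LI s k \<subseteq> LI s'' k4" "restr s k s'' k4"
  "k \<le> k4" "1 \<le> k"
  using T tr_le[OF T] ok_ge1[of s k] unfolding tr_def by auto

lemma mem: "x \<in> A \<union> I \<union> C \<longleftrightarrow> x \<in> LI s'' k4 \<and> x \<notin> Lf s k"
  using U Seg_mem by blast

lemma geK: "x \<in> A \<union> I \<union> C \<Longrightarrow> k \<le> x"
  using U Seg_ge by blast

lemma same_s: "A = {} \<Longrightarrow> I = Ic s k \<Longrightarrow> \<exists>s' k'. tr s k s' k' \<and> tr s' k' s'' k4 \<and> Ic s' k' = I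
     \<and> Seg s k s' k' = A \<union> I \<and> Seg s' k' s'' k4 = I \<union> C"
  by (rule fin[of s k]) (use tk in \<open>auto simp: restr_def\<close>)

lemma same_s'': "C = {} \<Longrightarrow> ok s' k' \<Longrightarrow> LI s' k' = LI s'' k4 \<Longrightarrow> Ic s' k' = I \<Longrightarrow> restr s k s' k'
   \<Longrightarrow> restr s' k' s'' k4 \<Longrightarrow> \<exists>s' k'. tr s k s' k' \<and> tr s' k' s'' k4 \<and> Ic s' k' = I
     \<and> Seg s k s' k' = A \<union> I \<and> Seg s' k' s'' k4 = I \<union> C"
proof -
  assume a: "C = {}" "ok s' k'" "LI s' k' = LI s'' k4" "Ic s' k' = I" "restr s k s' k'"
     "restr s' k' s'' k4"
  have "Lf s k \<subseteq> LI s'' k4" using tk(4) unfolding LI_def by auto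
  then have e: "LI s'' k4 = Lf s k \<union> A \<union> I" and dj: "Lf s k \<inter> (A \<union> I) = {}"
    using mem a(1) by auto
  have "Lf s' k' = Lf s k \<union> A"
    using e dj a(3,4) LfIc_disj[of s' k'] D1 unfolding LI_def by blast
  then show ?thesis using fin a by blast
qed

abbreviation (input) GL where "GL \<equiv> \<exists>s' k'. tr s k s' k' \<and> tr s' k' s'' k4 \<and> Ic s' k' = I
     \<and> Seg s k s' k' = A \<union> I \<and> Seg s' k' s'' k4 = I \<union> C"

lemma I_le2_start:
  assumes "A = {}" "Lf s k = {..<1}" "y \<in> I"
  shows "y \<le> 2"
proof (rule ccontr)
  assume "\<not> y \<le> 2"
  have y: "y \<in> LI s'' k4" "y \<notin> Lf s k" using mem assms(3) by auto
  have "s'' \<noteq> SS2"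
  proof
    assume "s'' = SS2"
    then have "k4 = 1" using tk(2) by simp
    then show False using y \<open>s'' = SS2\<close> \<open>\<not> y \<le> 2\<close> by auto
  qed
  then have "y - 2 \<in> LI s'' k4" using LI_down y(1) by auto
  moreover have "y - 2 \<notin> Lf s k" using assms(2) \<open>\<not> y \<le> 2\<close> by auto
  ultimately have "y - 2 \<in> I \<union> C" using mem assms(1) by auto
  then show False using anti mn assms(3) by force
qed

lemma caseA: "A = {} \<Longrightarrow> GL"
proof -
  assume A0: "A = {}"
  show ?thesis
  proof (cases s)
    case SB
    then have k1: "k = 1" using tk(1) by simp
    have Lf1: "Lf s k = {..<1}" using SB k1 by simp
    have Isub: "I \<subseteq> {1, 2}"
    proof
      fix y assume "y \<in> I"
      then show "y \<in> {1, 2}" using I_le2_start[OF A0 Lf1] geK[of y] k1 by fastforce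
    qed
    have r: "restr SB 1 s'' k4" using tk(5) SB k1 by simp
    consider "I = {}" | "I = {1}" | "I = {2}" | "I = {1,2}" using Isub by blast
    then show ?thesis
    proof cases
      case 1 then show ?thesis using fin[of SB 1] A0 Lf1 r by (auto simp: restr_def SB k1)
    next
      case 2 then show ?thesis using fin[of "SM1 True" 1] A0 Lf1 r by (auto simp: restr_def SB k1)
    next
      case 3 then show ?thesis using fin[of SS2 1] A0 Lf1 r by (auto simp: restr_def SB k1)
    next
      case 4 then show ?thesis using fin[of "SM2 True" 1] A0 Lf1 r by (auto simp: restr_def SB k1)
    qed
  next
    case SS2
    then have k1: "k = 1" using tk(1) by simp
    have Lf1: "Lf s k = {..<1}" using SS2 k1 by simp
    have Isub: "I \<subseteq> {1, 2}"
    proof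
      fix y assume "y \<in> I"
      then show "y \<in> {1, 2}" using I_le2_start[OF A0 Lf1] geK[of y] k1 by fastforce
    qed
    have two: "2 \<in> I" using S1 A0 SS2 k1 by auto
    consider "I = {2}" | "I = {1,2}" using Isub two by blast
    then show ?thesis
    proof cases
      case 1 then show ?thesis using same_s A0 SS2 k1 by simp
    next
      case 2 then show ?thesis using fin[of "SM2 True" 1] A0 Lf1 by (auto simp: restr_def SS2 k1)
    qed
  next
    case (SM1 b)
    have kI: "k \<in> I" using S1 A0 SM1 by auto
    have Isub: "I \<subseteq> {k, k+1}"
    proof
      fix y assume y: "y \<in> I"
      then have "k \<le> y" using geK by auto
      moreover have "\<not> k + 2 \<le> y" using anti kI y by blast
      ultimately show "y \<in> {k, k+1}" by auto
    qed
    consider "I = {k}" | "I = {k,k+1}" using Isub kI by blast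
    then show ?thesis
    proof cases
      case 1 then show ?thesis using same_s A0 SM1 by simp
    next
      case 2 then show ?thesis using fin[of "SM2 b" k] A0 tk(1) by (auto simp: restr_def SM1)
    qed
  next
    case (SM2 b)
    have kI: "k \<in> I" "k + 1 \<in> I" using S1 A0 SM2 by auto
    have Isub: "I \<subseteq> {k, k+1}"
    proof
      fix y assume y: "y \<in> I"
      then have "k \<le> y" using geK by auto
      moreover have "\<not> k + 2 \<le> y" using anti kI y by blast
      ultimately show "y \<in> {k, k+1}" by auto
    qed
    then have "I = {k, k+1}" using kI by blast
    then show ?thesis using same_s A0 SM2 by simp
  next
    case SE1
    have "Seg s k s'' k4 = {k}" using tk(5) SE1 unfolding restr_def Seg_LI by auto
    moreover have "k \<in> I" using S1 A0 SE1 by auto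
    ultimately have "I = {k}" using U A0 by blast
    then show ?thesis using same_s A0 SE1 by simp
  next
    case SE
    have "Seg s k s'' k4 = {}" using tk(5) SE unfolding restr_def Seg_LI by auto
    then have "I = {}" using U by blast
    then show ?thesis using same_s A0 SE by simp
  qed
qed

lemma Lf_SE1_notin: "s \<noteq> SE1 \<Longrightarrow> Lf s k = {..<k}"
  using Lf_cases[of s k] by auto

lemma caseC: "C = {} \<Longrightarrow> GL"
proof -
  assume C0: "C = {}"
  have gen: "I = Ic s'' k4 \<Longrightarrow> GL"
    using same_s''[OF C0 tk(2) refl] tk(5) by (auto simp: restr_def)
  show ?thesis
  proof (cases s'')
    case SB
    then have "s = SB \<or> s = SS2" using tr_to_SB T by auto
    then have "Seg s k s'' k4 = {}" using SB tk(1,2) unfolding Seg_LI by auto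
    then have "I = {}" using U by blast
    then show ?thesis using gen SB by simp
  next
    case SS2
    then have "s = SB \<or> s = SS2" using tr_to_SB T by auto
    then have "Seg s k s'' k4 \<subseteq> {2}" using SS2 tk(1,2) unfolding Seg_LI by auto
    moreover have "2 \<in> I" using S2 C0 SS2 tk(2) by auto
    ultimately have "I = {2}" using U by blast
    then show ?thesis using gen SS2 tk(2) by simp
  next
    case (SM1 b)
    have kI: "k4 \<in> I" using S2 C0 SM1 by auto
    have Isub: "I \<subseteq> {k4 - 1, k4}"
    proof
      fix y assume y: "y \<in> I"
      then have "y \<le> k4" using mem SM1 by auto
      moreover have "\<not> y + 2 \<le> k4" using anti kI y by blast
      ultimately show "y \<in> {k4 - 1, k4}" by auto
    qed
    consider "I = {k4}" | "I = {k4 - 1, k4}" using Isub kI by blast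
    then show ?thesis
    proof cases
      case 1 then show ?thesis using gen SM1 by simp
    next
      case 2
      have "k4 - 1 \<in> I" using 2 by auto
      then have "k \<le> k4 - 1" using geK[of "k4 - 1"] by auto
      moreover have "s \<noteq> SE \<and> s \<noteq> SE1" using tk(5) SM1 by (auto simp: restr_def)
      ultimately show ?thesis
        using same_s''[OF C0, of "SM2 (\<not> b)" "k4 - 1"] tk(1,2,7) 2 SM1
        by (auto simp: restr_def)
    qed
  next
    case (SM2 b)
    have kI: "k4 \<in> I" "k4 + 1 \<in> I" using S2 C0 SM2 by auto
    have Isub: "I \<subseteq> {k4, k4 + 1}"
    proof
      fix y assume y: "y \<in> I"
      then have "y \<le> k4 + 1" using mem SM2 by auto
      moreover have "\<not> y + 2 \<le> k4 + 1" using anti kI y by blast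
      ultimately show "y \<in> {k4, k4 + 1}" by auto
    qed
    then have "I = {k4, k4 + 1}" using kI by blast
    then show ?thesis using gen SM2 by simp
  next
    case SE1
    have kI: "k4 \<in> I" using S2 C0 SE1 by auto
    show ?thesis
    proof (cases "s = SE1")
      case True
      then have "k = k4" using tk(5) SE1 by (auto simp: restr_def)
      then have "Seg s k s'' k4 = {k4}" using True SE1 unfolding Seg_LI by auto
      then have "I = {k4}" using kI U by blast
      then show ?thesis using gen SE1 by simp
    next
      case False
      have Lfs: "Lf s k = {..<k}" using Lf_SE1_notin[OF False] .
      have sE: "s \<noteq> SE" using tk(5) SE1 by (auto simp: restr_def)
      have Isub: "I \<subseteq> {k4, k4 + 1}"
      proof
        fix y assume y: "y \<in> I"
        then have "y \<le> k4 + 1" using mem SE1 by auto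
        moreover have "\<not> k4 + 2 \<le> y" "\<not> y + 2 \<le> k4" using anti kI y by blast+
        moreover have "y \<noteq> k4 - 1"
        proof
          assume "y = k4 - 1"
          have "k4 + 1 \<in> A \<union> I \<union> C" using mem SE1 Lfs tk(6) by auto
          then show False using C0 mx anti y \<open>y = k4 - 1\<close> by force
        qed
        ultimately show "y \<in> {k4, k4 + 1}" by auto
      qed
      consider "I = {k4}" | "I = {k4, k4 + 1}" using Isub kI by blast
      then show ?thesis
      proof cases
        case 1 then show ?thesis using gen SE1 by simp
      next
        case 2 then show ?thesis
          using same_s''[OF C0, of "SM2 True" k4] tk(2) False sE SE1
          by (auto simp: restr_def)
      qed
    qed
  next
    case SE
    show ?thesis
    proof (cases "s = SE \<or> s = SE1")
      case True
      then have "(s = SE \<and> k4 = k) \<or> (s = SE1 \<and> k4 = k + 2)" using tk(5) SE by (auto simp: restr_def)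
      then show ?thesis
      proof
        assume "s = SE \<and> k4 = k"
        then have "Seg s k s'' k4 = {}" using SE unfolding Seg_LI by auto
        then have "I = {}" using U by blast
        then show ?thesis using gen SE by simp
      next
        assume a: "s = SE1 \<and> k4 = k + 2"
        then have "Seg s k s'' k4 = {k}" using SE unfolding Seg_LI by auto
        then have "I \<subseteq> {k}" using U by blast
        then have "I = {} \<or> I = {k}" by (rule subset_singletonD)
        then show ?thesis
        proof
          assume "I = {}" then show ?thesis using gen SE by simp
        next
          assume "I = {k}" then show ?thesis
            using same_s''[OF C0, of SE1 k] tk(1) a SE by (auto simp: restr_def)
        qed
      qed
    next
      case False
      have Lfs: "Lf s k = {..<k}" using Lf_SE1_notin False by auto
      have Isub: "I \<subseteq> {k4 - 2, k4 - 1}"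
      proof
        fix y assume y: "y \<in> I"
        then have y1: "y \<le> k4 - 1" "k \<le> y" using mem SE geK by auto
        have "\<not> y \<le> k4 - 3"
        proof
          assume "y \<le> k4 - 3"
          then have "y + 2 \<in> A \<union> I \<union> C" using mem SE Lfs y1 by auto
          then show False using C0 mx anti y by force
        qed
        then show "y \<in> {k4 - 2, k4 - 1}" using y1 by auto
      qed
      have ok4: "1 \<le> k4" "odd k4" using tk(2) SE by auto
      have rs: "restr s k s' k'" if "s' \<noteq> SE" "s = SE1 \<longrightarrow> s' = SE1 \<and> k' = k" for s' k'
        using False that by (auto simp: restr_def)
      consider "I = {}" | "I = {k4 - 1}" | "I = {k4 - 2}" | "I = {k4 - 2, k4 - 1}"
        using Isub by blast
      then show ?thesis
      proof cases
        case 1 then show ?thesis using gen SE by simp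
      next
        case 2
        then have "k \<le> k4 - 1" using geK[of "k4 - 1"] by auto
        then have o: "ok (SM1 False) (k4 - 1)" using tk(7) ok4 by auto
        show ?thesis
          by (rule same_s''[OF C0 o]) (use 2 SE rs[of "SM1 False" "k4 - 1"] False in \<open>auto simp: restr_def\<close>)
      next
        case 3
        then have "k \<le> k4 - 2" using geK[of "k4 - 2"] by auto
        then have o: "ok SE1 (k4 - 2)" using tk(7) ok4 by auto
        show ?thesis
          by (rule same_s''[OF C0 o]) (use 3 SE rs[of SE1 "k4 - 2"] False in \<open>auto simp: restr_def\<close>)
      next
        case 4
        then have "k \<le> k4 - 2" using geK[of "k4 - 2"] by auto
        then have o: "ok (SM2 True) (k4 - 2)" using tk(7) ok4 by auto
        show ?thesis
          by (rule same_s''[OF C0 o]) (use 4 SE rs[of "SM2 True" "k4 - 2"] False in \<open>auto simp: restr_def\<close>)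
      qed
    qed
  qed
qed

lemma caseAC: "A \<noteq> {} \<Longrightarrow> C \<noteq> {} \<Longrightarrow> GL"
proof -
  assume An: "A \<noteq> {}" and Cn: "C \<noteq> {}"
  have finA: "finite A"
  proof (rule finite_subset)
    show "A \<subseteq> {k..k4 + 1}" using mem geK LI_top by fastforce
  qed simp
  define m where "m = Max A"
  have mA: "m \<in> A" and mmax: "\<And>a. a \<in> A \<Longrightarrow> a \<le> m"
    using finA An m_def by auto
  obtain c where cC: "c \<in> C" using Cn by auto
  have mc: "m + 2 \<le> c" using sp mA cC by auto
  have cm: "c \<in> LI s'' k4" "c \<notin> Lf s k" using mem cC by auto
  have mm: "m \<in> LI s'' k4" "m \<notin> Lf s k" "k \<le> m" using mem geK mA by auto
  have n2: "s'' \<noteq> SS2"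
  proof
    assume "s'' = SS2"
    then have "s = SB \<or> s = SS2" using tr_to_SB T by auto
    then show False using \<open>s'' = SS2\<close> cm mm mc tk(1,2) by auto
  qed
  have nE: "s \<noteq> SE1 \<and> s \<noteq> SE"
  proof (rule ccontr)
    assume "\<not> (s \<noteq> SE1 \<and> s \<noteq> SE)"
    then have "Seg s k s'' k4 \<subseteq> {k}" using tk(5) unfolding restr_def Seg_LI by auto
    then have "m = k" "c = k" using U mA cC by auto
    then show False using mc by auto
  qed
  have Lfs: "Lf s k = {..<k}" using Lf_SE1_notin nE by auto
  have m1: "m + 1 \<in> I"
  proof -
    have "m + 1 \<in> LI s'' k4" using LI_down[OF cm(1) _ n2] mc by auto
    then have "m + 1 \<in> A \<union> I \<union> C" using mem Lfs mm(3) by auto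
    moreover have "m + 1 \<notin> A" using mmax by force
    moreover have "m + 1 \<notin> C" using sp mA by force
    ultimately show ?thesis by auto
  qed
  have Isub: "I \<subseteq> {m + 1, m + 2}"
  proof
    fix y assume y: "y \<in> I"
    have "\<not> y + 2 \<le> m + 1" "\<not> m + 1 + 2 \<le> y" using anti m1 y by blast+
    moreover have "y \<noteq> m" using y mA D1 by auto
    ultimately show "y \<in> {m + 1, m + 2}" by auto
  qed
  have Lnew: "Lf s k \<union> A = {..<m + 1}"
  proof
    show "Lf s k \<union> A \<subseteq> {..<m + 1}" using Lfs mm(3) mmax by fastforce
  next
    show "{..<m + 1} \<subseteq> Lf s k \<union> A"
    proof
      fix x assume x: "x \<in> {..<m + 1}"
      show "x \<in> Lf s k \<union> A"
      proof (cases "x < k")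
        case True then show ?thesis using Lfs by auto
      next
        case False
        then have "x \<in> LI s'' k4" using LI_down[OF mm(1) _ n2] x by auto
        then have "x \<in> A \<union> I \<union> C" using mem Lfs False by auto
        moreover have "x \<notin> I" using Isub x by auto
        moreover have "x \<notin> C" using sp mA x by force
        ultimately show ?thesis by auto
      qed
    qed
  qed
  have okm: "1 \<le> m + 1" using mm(3) tk(7) by auto
  have r1: "restr s k s' k'" if "s' \<noteq> SE" for s' k' using nE that by (auto simp: restr_def)
  consider "I = {m + 1}" | "I = {m + 1, m + 2}" using Isub m1 by blast
  then show ?thesis
  proof cases
    case 1
    have o: "ok (SM1 (odd (m + 1))) (m + 1)" using okm by simp
    show ?thesis
      by (rule fin[OF o]) (use Lnew 1 r1[of "SM1 (odd (m + 1))" "m + 1"] in \<open>auto simp: restr_def\<close>)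
  next
    case 2
    have o: "ok (SM2 (odd (m + 1))) (m + 1)" using okm by simp
    show ?thesis
    proof (rule fin[OF o])
      show "Lf (SM2 (odd (m + 1))) (m + 1) = Lf s k \<union> A" using Lnew by simp
      show "Ic (SM2 (odd (m + 1))) (m + 1) = I" using 2 by (simp add: add.assoc)
      show "restr s k (SM2 (odd (m + 1))) (m + 1)" using r1 by simp
      show "restr (SM2 (odd (m + 1))) (m + 1) s'' k4" by (simp add: restr_def)
    qed
  qed
qed

lemma split_main: GL
proof (cases "A = {}")
  case True then show ?thesis using caseA by blast
next
  case False
  show ?thesis
  proof (cases "C = {}")
    case True then show ?thesis using caseC by blast
  next
    case False2: False
    show ?thesis using caseAC False False2 by blast
  qed
qed

end


lemma Lf_eq_k: "Lf s k = Lf s' k' \<Longrightarrow> k = k'"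
proof (rule ccontr)
  assume a: "Lf s k = Lf s' k'" "k \<noteq> k'"
  show False
  proof (cases "k < k'")
    case True
    then have "k \<in> Lf s' k'" using Lf_lower[of k' s'] by auto
    then show False using a k_notin_Lf by auto
  next
    case False
    then have "k' \<in> Lf s k" using a(2) Lf_lower[of k s] by auto
    then show False using a k_notin_Lf by auto
  qed
qed

lemma tr_id:
  assumes "tr s k s' k'" "Seg s k s' k' = Ic s' k'" "Ic s k = Ic s' k'"
  shows "s = s' \<and> k = k'"
proof -
  have t: "ok s k" "ok s' k'" "Lf s k \<subseteq> Lf s' k'" "restr s k s' k'" using assms(1) unfolding tr_def by auto
  have "Lf s' k' \<subseteq> Lf s k"
    using assms(2) LfIc_disj[of s' k'] unfolding Seg_LI LI_def by blast
  then have L: "Lf s k = Lf s' k'" using t(3) by blast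
  then have kk: "k = k'" by (rule Lf_eq_k)
  have m: "(k+1 \<in> Lf s k) = (k+1 \<in> Lf s' k)" "(k \<in> Ic s k) = (k \<in> Ic s' k)"
    "(k+1 \<in> Ic s k) = (k+1 \<in> Ic s' k)"
    using L assms(3) kk by auto
  have o: "ok s k" "ok s' k" "restr s k s' k" using t kk by auto
  have "s = s'"
    using m o by (cases s; cases s'; simp add: restr_def)
  then show ?thesis using kk by simp
qed


section \<open>Readings of pomsets\<close>

definition rd :: "'a ipomset \<Rightarrow> st \<Rightarrow> int \<Rightarrow> st \<Rightarrow> int \<Rightarrow> (nat \<Rightarrow> int) \<Rightarrow> bool" where
  "rd P s k s' k' h \<longleftrightarrow> tr s k s' k' \<and> bij_betw h (pcar P) (Seg s k s' k')
     \<and> h ` psrc P = Ic s k \<and> h ` ptgt P = Ic s' k'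
     \<and> (\<forall>x\<in>pcar P. \<forall>y\<in>pcar P. (x,y) \<in> plt P \<longleftrightarrow> h x + 2 \<le> h y)
     \<and> (\<forall>x\<in>pcar P. \<forall>y\<in>pcar P. (x,y) \<in> pev P \<longleftrightarrow> odd (h x) \<and> (h y = h x + 1 \<or> h y = h x - 1))"

definition Read :: "'a ipomset \<Rightarrow> (st \<times> st) set" where
  "Read P = {(s, s'). \<exists>k k' h. rd P s k s' k' h}"

definition glue :: "'a ipomset \<Rightarrow> 'a ipomset \<Rightarrow> 'a ipomset \<Rightarrow> (nat \<Rightarrow> nat) \<Rightarrow> (nat \<Rightarrow> nat) \<Rightarrow> bool" where
  "glue P Q R i j \<longleftrightarrow> inj_on i (pcar P) \<and> inj_on j (pcar Q)
     \<and> pcar R = i ` pcar P \<union> j ` pcar Q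
     \<and> i ` pcar P \<inter> j ` pcar Q = i ` ptgt P
     \<and> i ` ptgt P = j ` psrc Q
     \<and> (\<forall>x\<in>ptgt P. \<forall>y\<in>ptgt P. \<forall>x'\<in>psrc Q. \<forall>y'\<in>psrc Q.
          i x = j x' \<longrightarrow> i y = j y' \<longrightarrow> ((x,y) \<in> pev P \<longleftrightarrow> (x',y') \<in> pev Q))
     \<and> (\<forall>x\<in>pcar P. plab R (i x) = plab P x)
     \<and> (\<forall>y\<in>pcar Q. plab R (j y) = plab Q y)
     \<and> plt R = (\<lambda>(x,y). (i x, i y)) ` plt P \<union> (\<lambda>(x,y). (j x, j y)) ` plt Q
              \<union> {(i x, j y) | x y. x \<in> pcar P - ptgt P \<and> y \<in> pcar Q - psrc Q}
     \<and> pev R = (\<lambda>(x,y). (i x, i y)) ` pev P \<union> (\<lambda>(x,y). (j x, j y)) ` pev Q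
     \<and> psrc R = i ` psrc P \<and> ptgt R = j ` ptgt Q"

lemma is_gluing_glue: "is_gluing P Q R \<longleftrightarrow> (\<exists>i j. glue P Q R i j)"
  unfolding is_gluing_def glue_def by simp

lemma ipo: assumes "is_ipomset P"
  shows "finite (pcar P)" "plt P \<subseteq> pcar P \<times> pcar P" "pev P \<subseteq> pcar P \<times> pcar P"
    "psrc P \<subseteq> pcar P" "ptgt P \<subseteq> pcar P"
    "\<And>x y. x \<in> psrc P \<Longrightarrow> (y, x) \<notin> plt P"
    "\<And>x y. x \<in> ptgt P \<Longrightarrow> (x, y) \<notin> plt P"
  using assms unfolding is_ipomset_def by auto

lemma rdD:
  assumes "rd X s k s' k' h"
  shows "tr s k s' k'" "inj_on h (pcar X)" "h ` pcar X = Seg s k s' k'"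
     "h ` psrc X = Ic s k" "h ` ptgt X = Ic s' k'"
     "\<And>x y. x \<in> pcar X \<Longrightarrow> y \<in> pcar X \<Longrightarrow> (x,y) \<in> plt X \<longleftrightarrow> h x + 2 \<le> h y"
     "\<And>x y. x \<in> pcar X \<Longrightarrow> y \<in> pcar X \<Longrightarrow> (x,y) \<in> pev X \<longleftrightarrow> odd (h x) \<and> (h y = h x + 1 \<or> h y = h x - 1)"
  using assms unfolding rd_def bij_betw_def by auto

context
  fixes P Q R :: "'a ipomset" and i j
  assumes G: "glue P Q R i j" and VP: "is_ipomset P" and VQ: "is_ipomset Q"
begin

lemma G_basic: "inj_on i (pcar P)" "inj_on j (pcar Q)" "pcar R = i ` pcar P \<union> j ` pcar Q"
  "i ` pcar P \<inter> j ` pcar Q = i ` ptgt P" "i ` ptgt P = j ` psrc Q"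
  "psrc R = i ` psrc P" "ptgt R = j ` ptgt Q"
  using G unfolding glue_def by auto

lemma G_pev: "x \<in> ptgt P \<Longrightarrow> y \<in> ptgt P \<Longrightarrow> x' \<in> psrc Q \<Longrightarrow> y' \<in> psrc Q
   \<Longrightarrow> i x = j x' \<Longrightarrow> i y = j y' \<Longrightarrow> (x,y) \<in> pev P \<longleftrightarrow> (x',y') \<in> pev Q"
  by (rule G[unfolded glue_def, THEN conjunct2, THEN conjunct2, THEN conjunct2, THEN conjunct2,
        THEN conjunct2, THEN conjunct1, rule_format])

lemma Gi: "x \<in> pcar P \<Longrightarrow> x \<notin> ptgt P \<Longrightarrow> i x \<notin> j ` pcar Q"
proof
  assume a: "x \<in> pcar P" "x \<notin> ptgt P" "i x \<in> j ` pcar Q"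
  then have "i x \<in> i ` ptgt P" using G_basic(4) by blast
  then show False using a G_basic(1) ipo(5)[OF VP] by (auto dest: inj_onD)
qed

lemma Gj: "y \<in> pcar Q \<Longrightarrow> y \<notin> psrc Q \<Longrightarrow> j y \<notin> i ` pcar P"
proof
  assume a: "y \<in> pcar Q" "y \<notin> psrc Q" "j y \<in> i ` pcar P"
  then have "j y \<in> j ` psrc Q" using G_basic(4,5) by blast
  then show False using a G_basic(2) ipo(4)[OF VQ] by (auto dest: inj_onD)
qed

lemma Gint_i: "x \<in> ptgt P \<Longrightarrow> \<exists>y\<in>psrc Q. i x = j y"
  using G_basic(5) by blast

lemma Gint_j: "y \<in> pcar Q \<Longrightarrow> j y \<in> i ` pcar P \<Longrightarrow> y \<in> psrc Q \<and> (\<exists>x\<in>ptgt P. j y = i x)"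
  using Gj G_basic(4,5) by blast

lemma Gint_i2: "x \<in> pcar P \<Longrightarrow> i x \<in> j ` pcar Q \<Longrightarrow> x \<in> ptgt P"
  using Gi by blast

lemma Gplt_i: "x \<in> pcar P \<Longrightarrow> y \<in> pcar P \<Longrightarrow> (i x, i y) \<in> plt R \<longleftrightarrow> (x, y) \<in> plt P"
proof
  assume xy: "x \<in> pcar P" "y \<in> pcar P"
  show "(x, y) \<in> plt P \<Longrightarrow> (i x, i y) \<in> plt R" using G unfolding glue_def by auto
  assume r: "(i x, i y) \<in> plt R"
  have pltP: "plt P \<subseteq> pcar P \<times> pcar P" and pltQ: "plt Q \<subseteq> pcar Q \<times> pcar Q"
    using ipo(2)[OF VP] ipo(2)[OF VQ] by auto
  have "plt R = (\<lambda>(x,y). (i x, i y)) ` plt P \<union> (\<lambda>(x,y). (j x, j y)) ` plt Q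
              \<union> {(i x, j y) | x y. x \<in> pcar P - ptgt P \<and> y \<in> pcar Q - psrc Q}"
    using G unfolding glue_def by auto
  with r consider (a) a b where "(a, b) \<in> plt P" "i x = i a" "i y = i b"
    | (b) a b where "(a, b) \<in> plt Q" "i x = j a" "i y = j b"
    | (c) a b where "a \<in> pcar P - ptgt P" "b \<in> pcar Q - psrc Q" "i x = i a" "i y = j b"
    by auto
  then show "(x, y) \<in> plt P"
  proof cases
    case a
    then show ?thesis using xy pltP G_basic(1) by (auto dest: inj_onD)
  next
    case b
    then have "b \<in> pcar Q" using pltQ by auto
    moreover have "j b \<in> i ` pcar P" using b xy by (metis image_eqI)
    ultimately have "b \<in> psrc Q" using Gint_j[of b] by auto
    then show ?thesis using b ipo(6)[OF VQ] by auto
  next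
    case c
    then have "j b \<in> i ` pcar P" using xy by (metis image_eqI)
    then show ?thesis using Gint_j[of b] c by auto
  qed
qed

lemma Gplt_j: "x \<in> pcar Q \<Longrightarrow> y \<in> pcar Q \<Longrightarrow> (j x, j y) \<in> plt R \<longleftrightarrow> (x, y) \<in> plt Q"
proof
  assume xy: "x \<in> pcar Q" "y \<in> pcar Q"
  show "(x, y) \<in> plt Q \<Longrightarrow> (j x, j y) \<in> plt R" using G unfolding glue_def by auto
  assume r: "(j x, j y) \<in> plt R"
  have pltP: "plt P \<subseteq> pcar P \<times> pcar P" and pltQ: "plt Q \<subseteq> pcar Q \<times> pcar Q"
    using ipo(2)[OF VP] ipo(2)[OF VQ] by auto
  have "plt R = (\<lambda>(x,y). (i x, i y)) ` plt P \<union> (\<lambda>(x,y). (j x, j y)) ` plt Q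
              \<union> {(i x, j y) | x y. x \<in> pcar P - ptgt P \<and> y \<in> pcar Q - psrc Q}"
    using G unfolding glue_def by auto
  with r consider (a) a b where "(a, b) \<in> plt P" "j x = i a" "j y = i b"
    | (b) a b where "(a, b) \<in> plt Q" "j x = j a" "j y = j b"
    | (c) a b where "a \<in> pcar P - ptgt P" "b \<in> pcar Q - psrc Q" "j x = i a" "j y = j b"
    by auto
  then show "(x, y) \<in> plt Q"
  proof cases
    case a
    then have "a \<in> pcar P" using pltP by auto
    then have "a \<in> ptgt P" using Gint_i2[of a] a xy by force
    then show ?thesis using a ipo(7)[OF VP] by auto
  next
    case b
    then show ?thesis using xy pltQ G_basic(2) by (auto dest: inj_onD)
  next
    case c
    then show ?thesis using Gint_i2[of a] xy by force
  qed
qed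

lemma Gplt_ij: "x \<in> pcar P - ptgt P \<Longrightarrow> y \<in> pcar Q - psrc Q \<Longrightarrow> (i x, j y) \<in> plt R"
  using G unfolding glue_def by auto

lemma Gplt_ji: "x \<in> pcar P - ptgt P \<Longrightarrow> y \<in> pcar Q - psrc Q \<Longrightarrow> (j y, i x) \<notin> plt R"
proof
  assume xy: "x \<in> pcar P - ptgt P" "y \<in> pcar Q - psrc Q" and r: "(j y, i x) \<in> plt R"
  have pltP: "plt P \<subseteq> pcar P \<times> pcar P" and pltQ: "plt Q \<subseteq> pcar Q \<times> pcar Q"
    using ipo(2)[OF VP] ipo(2)[OF VQ] by auto
  have "plt R = (\<lambda>(x,y). (i x, i y)) ` plt P \<union> (\<lambda>(x,y). (j x, j y)) ` plt Q
              \<union> {(i x, j y) | x y. x \<in> pcar P - ptgt P \<and> y \<in> pcar Q - psrc Q}"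
    using G unfolding glue_def by auto
  with r consider (a) a b where "(a, b) \<in> plt P" "j y = i a" "i x = i b"
    | (b) a b where "(a, b) \<in> plt Q" "j y = j a" "i x = j b"
    | (c) a b where "a \<in> pcar P - ptgt P" "b \<in> pcar Q - psrc Q" "j y = i a" "i x = j b"
    by auto
  then show False
  proof cases
    case a then show ?thesis using pltP Gj[of y] xy by force
  next
    case b then show ?thesis using pltQ Gi[of x] xy by force
  next
    case c then show ?thesis using Gj[of y] xy by force
  qed
qed

lemma Gpev_i: "x \<in> pcar P \<Longrightarrow> y \<in> pcar P \<Longrightarrow> (i x, i y) \<in> pev R \<longleftrightarrow> (x, y) \<in> pev P"
proof
  assume xy: "x \<in> pcar P" "y \<in> pcar P"
  show "(x, y) \<in> pev P \<Longrightarrow> (i x, i y) \<in> pev R" using G unfolding glue_def by auto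
  assume r: "(i x, i y) \<in> pev R"
  have pP: "pev P \<subseteq> pcar P \<times> pcar P" and pQ: "pev Q \<subseteq> pcar Q \<times> pcar Q"
    using ipo(3)[OF VP] ipo(3)[OF VQ] by auto
  have "pev R = (\<lambda>(x,y). (i x, i y)) ` pev P \<union> (\<lambda>(x,y). (j x, j y)) ` pev Q"
    using G unfolding glue_def by auto
  with r consider (a) a b where "(a, b) \<in> pev P" "i x = i a" "i y = i b"
    | (b) a b where "(a, b) \<in> pev Q" "i x = j a" "i y = j b"
    by auto
  then show "(x, y) \<in> pev P"
  proof cases
    case a
    then show ?thesis using xy pP G_basic(1) by (auto dest: inj_onD)
  next
    case b
    then have ab: "a \<in> pcar Q" "b \<in> pcar Q" using pQ by auto
    have "a \<in> psrc Q" "b \<in> psrc Q" using Gint_j[OF ab(1)] Gint_j[OF ab(2)] b xy by force+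
    moreover have "x \<in> ptgt P" "y \<in> ptgt P" using Gint_i2 xy b ab by force+
    ultimately show ?thesis using G_pev[of x y a b] b by simp
  qed
qed

lemma Gpev_j: "x \<in> pcar Q \<Longrightarrow> y \<in> pcar Q \<Longrightarrow> (j x, j y) \<in> pev R \<longleftrightarrow> (x, y) \<in> pev Q"
proof
  assume xy: "x \<in> pcar Q" "y \<in> pcar Q"
  show "(x, y) \<in> pev Q \<Longrightarrow> (j x, j y) \<in> pev R" using G unfolding glue_def by auto
  assume r: "(j x, j y) \<in> pev R"
  have pP: "pev P \<subseteq> pcar P \<times> pcar P" and pQ: "pev Q \<subseteq> pcar Q \<times> pcar Q"
    using ipo(3)[OF VP] ipo(3)[OF VQ] by auto
  have "pev R = (\<lambda>(x,y). (i x, i y)) ` pev P \<union> (\<lambda>(x,y). (j x, j y)) ` pev Q"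
    using G unfolding glue_def by auto
  with r consider (a) a b where "(a, b) \<in> pev P" "j x = i a" "j y = i b"
    | (b) a b where "(a, b) \<in> pev Q" "j x = j a" "j y = j b"
    by auto
  then show "(x, y) \<in> pev Q"
  proof cases
    case a
    then have ab: "a \<in> pcar P" "b \<in> pcar P" using pP by auto
    have "a \<in> ptgt P" "b \<in> ptgt P" using Gint_i2 ab a xy by force+
    moreover have "x \<in> psrc Q" "y \<in> psrc Q" using Gint_j xy a ab by force+
    ultimately show ?thesis using G_pev[of a b x y] a by simp
  next
    case b
    then show ?thesis using xy pQ G_basic(2) by (auto dest: inj_onD)
  qed
qed

lemma Gpev_ij: "x \<in> pcar P - ptgt P \<Longrightarrow> y \<in> pcar Q - psrc Q \<Longrightarrow> (i x, j y) \<notin> pev R \<and> (j y, i x) \<notin> pev R"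
proof -
  assume xy: "x \<in> pcar P - ptgt P" "y \<in> pcar Q - psrc Q"
  have pP: "pev P \<subseteq> pcar P \<times> pcar P" and pQ: "pev Q \<subseteq> pcar Q \<times> pcar Q"
    using ipo(3)[OF VP] ipo(3)[OF VQ] by auto
  have e: "pev R = (\<lambda>(x,y). (i x, i y)) ` pev P \<union> (\<lambda>(x,y). (j x, j y)) ` pev Q"
    using G unfolding glue_def by auto
  have "i x \<notin> j ` pcar Q" "j y \<notin> i ` pcar P" using Gi Gj xy by auto
  then show ?thesis unfolding e using pP pQ by force
qed

lemma read_split:
  assumes r: "rd R s k s'' k4 h"
  shows "\<exists>s' k2. rd P s k s' k2 (h \<circ> i) \<and> rd Q s' k2 s'' k4 (h \<circ> j)"
proof -
  note rr = rdD[OF r]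
  define A where "A = h ` i ` (pcar P - ptgt P)"
  define I where "I = h ` i ` ptgt P"
  define C where "C = h ` j ` (pcar Q - psrc Q)"
  have iP: "i ` pcar P \<subseteq> pcar R" and jQ: "j ` pcar Q \<subseteq> pcar R" using G_basic(3) by auto
  have iR: "\<And>x. x \<in> pcar P \<Longrightarrow> i x \<in> pcar R" and jR: "\<And>x. x \<in> pcar Q \<Longrightarrow> j x \<in> pcar R"
    using iP jQ by auto
  have tP: "ptgt P \<subseteq> pcar P" "psrc P \<subseteq> pcar P" using ipo[OF VP] by auto
  have sQ: "psrc Q \<subseteq> pcar Q" "ptgt Q \<subseteq> pcar Q" using ipo[OF VQ] by auto
  have e1: "pcar P = (pcar P - ptgt P) \<union> ptgt P" using tP by blast
  have e2: "pcar Q = (pcar Q - psrc Q) \<union> psrc Q" using sQ by blast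
  have i1: "i ` pcar P = i ` (pcar P - ptgt P) \<union> i ` ptgt P" by (metis e1 image_Un)
  have j1: "j ` pcar Q = j ` (pcar Q - psrc Q) \<union> j ` psrc Q" by (metis e2 image_Un)
  have decR: "pcar R = i ` (pcar P - ptgt P) \<union> i ` ptgt P \<union> j ` (pcar Q - psrc Q)"
    unfolding G_basic(3) i1 j1 G_basic(5) by blast
  have U: "Seg s k s'' k4 = A \<union> I \<union> C"
    unfolding A_def I_def C_def rr(3)[symmetric] decR by (simp add: image_Un)
  have hI: "\<And>X Y. X \<subseteq> pcar R \<Longrightarrow> Y \<subseteq> pcar R \<Longrightarrow> X \<inter> Y = {} \<Longrightarrow> h ` X \<inter> h ` Y = {}"
    using rr(2) by (metis image_empty inj_on_image_Int)
  have d1: "i ` (pcar P - ptgt P) \<inter> i ` ptgt P = {}"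
    using G_basic(1) tP by (metis Diff_disjoint Int_commute image_empty inj_on_image_Int Diff_subset)
  have d2: "i ` (pcar P - ptgt P) \<inter> j ` (pcar Q - psrc Q) = {}"
    using Gi by blast
  have d3: "i ` ptgt P \<inter> j ` (pcar Q - psrc Q) = {}"
    using G_basic(2,5) sQ by (metis Diff_disjoint Int_commute image_empty inj_on_image_Int Diff_subset)
  have D1: "A \<inter> I = {}" unfolding A_def I_def by (rule hI) (use iP tP d1 in auto)
  have D2: "A \<inter> C = {}" unfolding A_def C_def by (rule hI) (use iP jQ d2 in auto)
  have D3: "I \<inter> C = {}" unfolding I_def C_def by (rule hI) (use iP jQ tP d3 in force)+
  have sp: "\<forall>a\<in>A. \<forall>c\<in>C. a + 2 \<le> c"
  proof (intro ballI)
    fix a c assume "a \<in> A" "c \<in> C"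
    then obtain x y where xy: "x \<in> pcar P - ptgt P" "y \<in> pcar Q - psrc Q" "a = h (i x)" "c = h (j y)"
      unfolding A_def C_def by auto
    have "(i x, j y) \<in> plt R" using Gplt_ij xy by auto
    then show "a + 2 \<le> c" using rr(6)[OF iR jR] xy by auto
  qed
  have anti: "\<forall>x\<in>I. \<forall>y\<in>I. \<not> x + 2 \<le> y"
  proof (intro ballI)
    fix a b assume "a \<in> I" "b \<in> I"
    then obtain x y where xy: "x \<in> ptgt P" "y \<in> ptgt P" "a = h (i x)" "b = h (i y)"
      unfolding I_def by auto
    have "(x, y) \<notin> plt P" using ipo(7)[OF VP] xy by auto
    then have "(i x, i y) \<notin> plt R" using Gplt_i xy tP by auto
    then show "\<not> a + 2 \<le> b" using rr(6)[OF iR iR] xy tP by auto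
  qed
  have mx: "\<forall>x\<in>I. \<forall>a\<in>A. \<not> x + 2 \<le> a"
  proof (intro ballI)
    fix a b assume "a \<in> I" "b \<in> A"
    then obtain x y where xy: "x \<in> ptgt P" "y \<in> pcar P" "a = h (i x)" "b = h (i y)"
      unfolding I_def A_def by auto
    have "(x, y) \<notin> plt P" using ipo(7)[OF VP] xy by auto
    then have "(i x, i y) \<notin> plt R" using Gplt_i xy tP by auto
    then show "\<not> a + 2 \<le> b" using rr(6)[OF iR iR] xy tP by auto
  qed
  have mn: "\<forall>x\<in>I. \<forall>c\<in>C. \<not> c + 2 \<le> x"
  proof (intro ballI)
    fix a b assume "a \<in> I" "b \<in> C"
    then obtain x y where xy: "x \<in> ptgt P" "y \<in> pcar Q" "a = h (i x)" "b = h (j y)"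
      unfolding I_def C_def by auto
    obtain y0 where y0: "y0 \<in> psrc Q" "i x = j y0" using Gint_i xy by blast
    have "(y, y0) \<notin> plt Q" using ipo(6)[OF VQ] y0 by auto
    then have "(j y, j y0) \<notin> plt R" using Gplt_j xy y0 sQ by auto
    then show "\<not> b + 2 \<le> a" using rr(6)[OF jR jR, of y y0] xy y0 sQ by auto
  qed
  have S1: "Ic s k \<subseteq> A \<union> I"
    unfolding rr(4)[symmetric] G_basic(6) A_def I_def using tP by blast
  have S2: "Ic s'' k4 \<subseteq> I \<union> C"
  proof -
    have "j ` ptgt Q \<subseteq> j ` pcar Q" using sQ(2) by (rule image_mono)
    also have "\<dots> = i ` ptgt P \<union> j ` (pcar Q - psrc Q)" using j1 G_basic(5) by auto
    finally have "h ` j ` ptgt Q \<subseteq> h ` (i ` ptgt P \<union> j ` (pcar Q - psrc Q))" by (rule image_mono)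
    then show ?thesis unfolding rr(5)[symmetric] G_basic(7) I_def C_def by (simp add: image_Un)
  qed
  obtain s' k2 where sk: "tr s k s' k2" "tr s' k2 s'' k4" "Ic s' k2 = I" "Seg s k s' k2 = A \<union> I"
    "Seg s' k2 s'' k4 = I \<union> C"
    using split_main[OF rr(1) U D1 D2 D3 sp anti mx mn S1 S2] by blast
  have injP: "inj_on (h \<circ> i) (pcar P)"
    using rr(2) G_basic(1) iP by (simp add: comp_inj_on inj_on_subset)
  have injQ: "inj_on (h \<circ> j) (pcar Q)"
    using rr(2) G_basic(2) jQ by (simp add: comp_inj_on inj_on_subset)
  have imP: "(h \<circ> i) ` pcar P = A \<union> I" unfolding A_def I_def
    by (simp only: image_comp[symmetric] i1 image_Un)
  have imQ: "(h \<circ> j) ` pcar Q = I \<union> C" unfolding I_def C_def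
    by (simp only: image_comp[symmetric] j1 image_Un G_basic(5) Un_commute)
  have rP: "rd P s k s' k2 (h \<circ> i)"
    unfolding rd_def
  proof (intro conjI ballI)
    show "tr s k s' k2" by fact
    show "bij_betw (h \<circ> i) (pcar P) (Seg s k s' k2)" using injP imP sk(4) by (simp add: bij_betw_def)
    show "(h \<circ> i) ` psrc P = Ic s k" using rr(4) G_basic(6) by (simp add: image_comp)
    show "(h \<circ> i) ` ptgt P = Ic s' k2" using sk(3) I_def by (simp add: image_comp)
    fix x y assume xy: "x \<in> pcar P" "y \<in> pcar P"
    show "((x, y) \<in> plt P) = ((h \<circ> i) x + 2 \<le> (h \<circ> i) y)"
      using Gplt_i[OF xy] rr(6)[OF iR iR] xy by auto
    show "((x, y) \<in> pev P) = (odd ((h \<circ> i) x) \<and> ((h \<circ> i) y = (h \<circ> i) x + 1 \<or> (h \<circ> i) y = (h \<circ> i) x - 1))"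
      using Gpev_i[OF xy] rr(7)[OF iR iR] xy by auto
  qed
  have rQ: "rd Q s' k2 s'' k4 (h \<circ> j)"
    unfolding rd_def
  proof (intro conjI ballI)
    show "tr s' k2 s'' k4" by fact
    show "bij_betw (h \<circ> j) (pcar Q) (Seg s' k2 s'' k4)" using injQ imQ sk(5) by (simp add: bij_betw_def)
    show "(h \<circ> j) ` psrc Q = Ic s' k2" using sk(3) I_def G_basic(5) by (simp add: image_comp)
    show "(h \<circ> j) ` ptgt Q = Ic s'' k4" using rr(5) G_basic(7) by (simp add: image_comp)
    fix x y assume xy: "x \<in> pcar Q" "y \<in> pcar Q"
    show "((x, y) \<in> plt Q) = ((h \<circ> j) x + 2 \<le> (h \<circ> j) y)"
      using Gplt_j[OF xy] rr(6)[OF jR jR] xy by auto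
    show "((x, y) \<in> pev Q) = (odd ((h \<circ> j) x) \<and> ((h \<circ> j) y = (h \<circ> j) x + 1 \<or> (h \<circ> j) y = (h \<circ> j) x - 1))"
      using Gpev_j[OF xy] rr(7)[OF jR jR] xy by auto
  qed
  show ?thesis using rP rQ by blast
qed

lemma consist:
  assumes rP: "rd P s k1 s' k2 hP" and rQ: "rd Q s' k2 s'' k4 hQ"
    and x: "x \<in> ptgt P" and y: "y \<in> psrc Q" and e: "i x = j y"
  shows "hP x = hQ y"
proof -
  note p = rdD[OF rP] and q = rdD[OF rQ]
  have tP: "ptgt P \<subseteq> pcar P" using ipo[OF VP] by auto
  have sQ: "psrc Q \<subseteq> pcar Q" using ipo[OF VQ] by auto
  have hx: "hP x \<in> Ic s' k2" using p(5) x by auto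
  have hy: "hQ y \<in> Ic s' k2" using q(4) y by auto
  show ?thesis
  proof (cases "\<exists>b. s' = SM2 b")
    case False
    then show ?thesis using hx hy by (cases s') auto
  next
    case True
    then obtain b where b: "s' = SM2 b" by auto
    have hx2: "hP x \<in> {k2, k2 + 1}" "hQ y \<in> {k2, k2 + 1}" using hx hy b by auto
    define v where "v = (if hP x = k2 then k2 + 1 else k2)"
    have "v \<in> Ic s' k2" using b v_def by auto
    then obtain x2 where x2: "x2 \<in> ptgt P" "hP x2 = v" using p(5) by (metis imageE)
    have vx: "v \<noteq> hP x" "v = hP x + 1 \<or> v = hP x - 1" using v_def hx2 by auto
    obtain y2 where y2: "y2 \<in> psrc Q" "i x2 = j y2" using Gint_i x2 by blast
    have "x2 \<noteq> x" using vx x2 by auto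
    then have "y2 \<noteq> y" using y2 e x x2 G_basic(1) tP by (metis inj_onD subsetD)
    then have "hQ y2 \<noteq> hQ y" using q(2) y y2 sQ by (metis inj_onD subsetD)
    moreover have "hQ y2 \<in> {k2, k2 + 1}" using q(4) y2 b by auto
    ultimately have vy: "hQ y2 = hQ y + 1 \<or> hQ y2 = hQ y - 1" using hx2 by auto
    have "(x, x2) \<in> pev P \<longleftrightarrow> (y, y2) \<in> pev Q" using G_pev x x2 y y2 e by auto
    moreover have "(x, x2) \<in> pev P \<longleftrightarrow> odd (hP x)" using p(7)[of x x2] x x2 tP vx by auto
    moreover have "(y, y2) \<in> pev Q \<longleftrightarrow> odd (hQ y)" using q(7)[of y y2] y y2 sQ vy by auto
    ultimately have "odd (hP x) \<longleftrightarrow> odd (hQ y)" by simp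
    then show ?thesis using hx2 by auto
  qed
qed

lemma read_glue:
  assumes rP: "rd P s k1 s' k2 hP" and rQ: "rd Q s' k2 s'' k4 hQ"
  shows "\<exists>h. rd R s k1 s'' k4 h"
proof -
  note p = rdD[OF rP] and q = rdD[OF rQ]
  have tP: "ptgt P \<subseteq> pcar P" "psrc P \<subseteq> pcar P" using ipo[OF VP] by auto
  have sQ: "psrc Q \<subseteq> pcar Q" "ptgt Q \<subseteq> pcar Q" using ipo[OF VQ] by auto
  define hR where "hR z = (if z \<in> i ` pcar P then hP (inv_into (pcar P) i z) else hQ (inv_into (pcar Q) j z))" for z
  have hRi: "\<And>x. x \<in> pcar P \<Longrightarrow> hR (i x) = hP x"
    unfolding hR_def using G_basic(1) by simp
  have hRj: "hR (j y) = hQ y" if y: "y \<in> pcar Q" for y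
  proof (cases "j y \<in> i ` pcar P")
    case True
    then obtain x where x: "x \<in> ptgt P" "j y = i x" "y \<in> psrc Q" using Gint_j y by blast
    then have "hR (j y) = hP x" using hRi tP by auto
    also have "\<dots> = hQ y" using consist[OF rP rQ x(1) x(3)] x by simp
    finally show ?thesis .
  next
    case False
    then show ?thesis unfolding hR_def using G_basic(2) y by simp
  qed
  have Ptgt_Q: "\<And>x. x \<in> ptgt P \<Longrightarrow> \<exists>y\<in>psrc Q. i x = j y" using Gint_i by blast
  have tr': "tr s k1 s'' k4" using tr_trans p(1) q(1) by blast
  have side: "(\<exists>x\<in>pcar P - ptgt P. z = i x) \<or> (\<exists>y\<in>pcar Q. z = j y)" if z: "z \<in> pcar R" for z
  proof -
    have "z \<in> i ` pcar P \<or> z \<in> j ` pcar Q" using z G_basic(3) by blast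
    then show ?thesis
    proof
      assume "z \<in> i ` pcar P"
      then obtain x where x: "x \<in> pcar P" "z = i x" by blast
      show ?thesis
      proof (cases "x \<in> ptgt P")
        case True
        then obtain y where "y \<in> psrc Q" "i x = j y" using Ptgt_Q by blast
        then show ?thesis using x sQ by blast
      next
        case False then show ?thesis using x by blast
      qed
    qed blast
  qed
  have sep': "hP x + 2 \<le> hQ y" if "x \<in> pcar P - ptgt P" "y \<in> pcar Q - psrc Q" for x y
  proof (rule sep[OF p(1) q(1)])
    have "hP x \<notin> hP ` ptgt P" using that p(2) tP by (auto dest: inj_onD)
    then show "hP x \<in> Seg s k1 s' k2 - Ic s' k2" using p(3,5) that by auto
    have "hQ y \<notin> hQ ` psrc Q" using that q(2) sQ by (auto dest: inj_onD)
    then show "hQ y \<in> Seg s' k2 s'' k4 - Ic s' k2" using q(3,4) that by auto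
  qed
  have img: "hR ` pcar R = Seg s k1 s'' k4"
  proof -
    have "hR ` pcar R = hR ` i ` pcar P \<union> hR ` j ` pcar Q" using G_basic(3) by (simp add: image_Un)
    also have "hR ` i ` pcar P = hP ` pcar P" using hRi by (auto simp: image_comp; metis hRi image_eqI)
    also have "hR ` j ` pcar Q = hQ ` pcar Q" using hRj by (auto simp: image_comp; metis hRj image_eqI)
    finally show ?thesis using p(3) q(3) Seg_union[OF p(1) q(1)] by simp
  qed
  have inj: "inj_on hR (pcar R)"
  proof (rule inj_onI)
    fix z1 z2 assume z: "z1 \<in> pcar R" "z2 \<in> pcar R" "hR z1 = hR z2"
    have cross: False if "x \<in> pcar P - ptgt P" "y \<in> pcar Q" "hP x = hQ y" for x y
    proof (cases "y \<in> psrc Q")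
      case True
      then obtain x' where "x' \<in> ptgt P" "j y = i x'" using G_basic(5) by (metis imageE imageI)
      then have "hP x' = hQ y" using consist[OF rP rQ] True by auto
      then have "x = x'" using that p(2) tP \<open>x' \<in> ptgt P\<close> by (metis DiffD1 inj_onD subsetD)
      then show False using that \<open>x' \<in> ptgt P\<close> by auto
    next
      case False
      then show False using sep'[of x y] that by auto
    qed
    from side[OF z(1)] side[OF z(2)] show "z1 = z2"
    proof (elim disjE bexE)
      fix x1 x2 assume "x1 \<in> pcar P - ptgt P" "z1 = i x1" "x2 \<in> pcar P - ptgt P" "z2 = i x2"
      then show ?thesis using z(3) hRi p(2) by (auto dest: inj_onD)
    next
      fix x1 y2 assume "x1 \<in> pcar P - ptgt P" "z1 = i x1" "y2 \<in> pcar Q" "z2 = j y2"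
      then show ?thesis using z(3) hRi hRj cross by auto
    next
      fix y1 x2 assume "y1 \<in> pcar Q" "z1 = j y1" "x2 \<in> pcar P - ptgt P" "z2 = i x2"
      then show ?thesis using z(3) hRi hRj cross by force
    next
      fix y1 y2 assume "y1 \<in> pcar Q" "z1 = j y1" "y2 \<in> pcar Q" "z2 = j y2"
      then show ?thesis using z(3) hRj q(2) by (auto dest: inj_onD)
    qed
  qed
  have src: "hR ` psrc R = Ic s k1"
  proof -
    have "hR ` psrc R = (hR \<circ> i) ` psrc P" using G_basic(6) by (simp add: image_comp)
    also have "\<dots> = hP ` psrc P" by (rule image_cong) (use hRi tP in auto)
    finally show ?thesis using p(4) by simp
  qed
  have tgt: "hR ` ptgt R = Ic s'' k4"
  proof -
    have "hR ` ptgt R = (hR \<circ> j) ` ptgt Q" using G_basic(7) by (simp add: image_comp)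
    also have "\<dots> = hQ ` ptgt Q" by (rule image_cong) (use hRj sQ in auto)
    finally show ?thesis using q(5) by simp
  qed
  have iR: "\<And>x. x \<in> pcar P \<Longrightarrow> i x \<in> pcar R" and jR: "\<And>y. y \<in> pcar Q \<Longrightarrow> j y \<in> pcar R"
    using G_basic(3) by auto
  have srcj: "\<And>y. y \<in> psrc Q \<Longrightarrow> \<exists>x\<in>ptgt P. j y = i x" using G_basic(5) by (metis imageE imageI)
  have H: "((z1, z2) \<in> plt R \<longleftrightarrow> hR z1 + 2 \<le> hR z2)
     \<and> ((z1, z2) \<in> pev R \<longleftrightarrow> odd (hR z1) \<and> (hR z2 = hR z1 + 1 \<or> hR z2 = hR z1 - 1))"
    if z: "z1 \<in> pcar R" "z2 \<in> pcar R" for z1 z2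
  proof -
    have PP: ?thesis if "x1 \<in> pcar P" "x2 \<in> pcar P" "z1 = i x1" "z2 = i x2" for x1 x2
      using that Gplt_i Gpev_i p(6,7) hRi by auto
    have QQ: ?thesis if "y1 \<in> pcar Q" "y2 \<in> pcar Q" "z1 = j y1" "z2 = j y2" for y1 y2
      using that Gplt_j Gpev_j q(6,7) hRj by auto
    from side[OF z(1)] side[OF z(2)] show ?thesis
    proof (elim disjE bexE)
      fix x1 x2 assume "x1 \<in> pcar P - ptgt P" "z1 = i x1" "x2 \<in> pcar P - ptgt P" "z2 = i x2"
      then show ?thesis using PP by auto
    next
      fix x1 y2 assume a: "x1 \<in> pcar P - ptgt P" "z1 = i x1" "y2 \<in> pcar Q" "z2 = j y2"
      show ?thesis
      proof (cases "y2 \<in> psrc Q")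
        case True
        then obtain x2 where "x2 \<in> ptgt P" "j y2 = i x2" using srcj by blast
        then show ?thesis using PP[of x1 x2] a tP by auto
      next
        case False
        have "(z1, z2) \<in> plt R" "(z1, z2) \<notin> pev R" using Gplt_ij Gpev_ij a False by auto
        moreover have "hR z1 + 2 \<le> hR z2" using sep'[of x1 y2] a False hRi hRj by auto
        ultimately show ?thesis by auto
      qed
    next
      fix y1 x2 assume a: "y1 \<in> pcar Q" "z1 = j y1" "x2 \<in> pcar P - ptgt P" "z2 = i x2"
      show ?thesis
      proof (cases "y1 \<in> psrc Q")
        case True
        then obtain x1 where "x1 \<in> ptgt P" "j y1 = i x1" using srcj by blast
        then show ?thesis using PP[of x1 x2] a tP by auto
      next
        case False
        have "(z1, z2) \<notin> plt R" "(z1, z2) \<notin> pev R" using Gplt_ji Gpev_ij a False by auto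
        moreover have "hR z2 + 2 \<le> hR z1" using sep'[of x2 y1] a False hRi hRj by auto
        ultimately show ?thesis by auto
      qed
    next
      fix y1 y2 assume "y1 \<in> pcar Q" "z1 = j y1" "y2 \<in> pcar Q" "z2 = j y2"
      then show ?thesis using QQ by auto
    qed
  qed
  have "rd R s k1 s'' k4 hR"
    unfolding rd_def bij_betw_def using tr' inj img src tgt H by blast
  then show ?thesis by blast
qed

end


lemma shift_img: "(\<lambda>x. h x + (d::int)) ` X = {y. y - d \<in> S}" if "h ` X = S"
proof
  show "(\<lambda>x. h x + d) ` X \<subseteq> {y. y - d \<in> S}" using that by auto
  show "{y. y - d \<in> S} \<subseteq> (\<lambda>x. h x + d) ` X"
  proof
    fix y assume "y \<in> {y. y - d \<in> S}"
    then have "y - d \<in> h ` X" using that by simp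
    then obtain x where x: "x \<in> X" "h x = y - d" by (metis imageE)
    then have "y = h x + d" by simp
    then show "y \<in> (\<lambda>x. h x + d) ` X" using x(1) by blast
  qed
qed

lemma rd_shift:
  assumes r: "rd Q s k s' k' h" and d: "even d" "1 \<le> k + d" "s = SB \<or> s = SS2 \<longrightarrow> d = 0"
  shows "rd Q s (k + d) s' (k' + d) (\<lambda>x. h x + d)"
proof -
  note q = rdD[OF r]
  have "inj_on (\<lambda>x. h x + d) (pcar Q)" using q(2) by (auto simp: inj_on_def)
  moreover have "(\<lambda>x. h x + d) ` pcar Q = Seg s (k + d) s' (k' + d)"
    unfolding Seg_shift by (rule shift_img[OF q(3)])
  moreover have "(\<lambda>x. h x + d) ` psrc Q = Ic s (k + d)"
    unfolding Ic_shift by (rule shift_img[OF q(4)])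
  moreover have "(\<lambda>x. h x + d) ` ptgt Q = Ic s' (k' + d)"
    unfolding Ic_shift by (rule shift_img[OF q(5)])
  moreover have "tr s (k + d) s' (k' + d)" using tr_shift[OF q(1) d] .
  moreover have "\<forall>x\<in>pcar Q. \<forall>y\<in>pcar Q. (x,y) \<in> plt Q \<longleftrightarrow> h x + d + 2 \<le> h y + d"
    using q(6) by auto
  moreover have "\<forall>x\<in>pcar Q. \<forall>y\<in>pcar Q. (x,y) \<in> pev Q \<longleftrightarrow> odd (h x + d) \<and> (h y + d = h x + d + 1 \<or> h y + d = h x + d - 1)"
    using q(7) d(1) by (auto simp: even_add)
  ultimately show ?thesis unfolding rd_def bij_betw_def by auto
qed

lemma ok_same: "ok s a \<Longrightarrow> ok s b \<Longrightarrow> even (a - b) \<and> (s = SB \<or> s = SS2 \<longrightarrow> a = b)"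
  by (cases s) (auto simp: even_add)

lemma Read_glue:
  assumes G: "glue P Q R i j" and VP: "is_ipomset P" and VQ: "is_ipomset Q"
  shows "Read R = Read P O Read Q"
proof
  show "Read R \<subseteq> Read P O Read Q"
  proof
    fix p assume "p \<in> Read R"
    then obtain s s'' k k4 h where p: "p = (s, s'')" "rd R s k s'' k4 h" unfolding Read_def by auto
    then obtain s' k2 where "rd P s k s' k2 (h \<circ> i)" "rd Q s' k2 s'' k4 (h \<circ> j)"
      using read_split[OF G VP VQ] by blast
    then show "p \<in> Read P O Read Q" unfolding Read_def using p by blast
  qed
  show "Read P O Read Q \<subseteq> Read R"
  proof
    fix p assume "p \<in> Read P O Read Q"
    then obtain s s' s'' k1 k2 k3 k4 hP hQ where p: "p = (s, s'')" "rd P s k1 s' k2 hP"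
      "rd Q s' k3 s'' k4 hQ" unfolding Read_def by blast
    have o: "ok s' k2" "ok s' k3" using rdD(1)[OF p(2)] rdD(1)[OF p(3)] unfolding tr_def by auto
    have k31: "1 \<le> k3 + (k2 - k3)" using ok_ge1[OF o(1)] by simp
    have "rd Q s' (k3 + (k2 - k3)) s'' (k4 + (k2 - k3)) (\<lambda>x. hQ x + (k2 - k3))"
      by (rule rd_shift[OF p(3)]) (use ok_same[OF o] k31 in auto)
    then have "rd Q s' k2 s'' (k4 + (k2 - k3)) (\<lambda>x. hQ x + (k2 - k3))" by simp
    then obtain h where "rd R s k1 s'' (k4 + (k2 - k3)) h" using read_glue[OF G VP VQ p(2)] by blast
    then show "p \<in> Read R" unfolding Read_def using p by blast
  qed
qed


lemma rd_iso_back: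
  assumes f: "bij_betw f (pcar P) (pcar Q)"
    and lt: "\<forall>x\<in>pcar P. \<forall>y\<in>pcar P. (f x, f y) \<in> plt Q \<longleftrightarrow> (x,y) \<in> plt P"
    and ev: "\<forall>x\<in>pcar P. \<forall>y\<in>pcar P. (f x, f y) \<in> pev Q \<longleftrightarrow> (x,y) \<in> pev P"
    and sr: "f ` psrc P = psrc Q" and tg: "f ` ptgt P = ptgt Q"
    and r: "rd Q s k s' k' h"
  shows "rd P s k s' k' (h \<circ> f)"
proof -
  note q = rdD[OF r]
  have fQ: "\<And>x. x \<in> pcar P \<Longrightarrow> f x \<in> pcar Q" using f by (auto simp: bij_betw_def)
  have "bij_betw (h \<circ> f) (pcar P) (Seg s k s' k')"
    using f r unfolding rd_def by (auto intro: bij_betw_trans)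
  moreover have "(h \<circ> f) ` psrc P = Ic s k" "(h \<circ> f) ` ptgt P = Ic s' k'"
    by (simp only: image_comp[symmetric] sr tg q(4) q(5))+
  moreover have "\<forall>x\<in>pcar P. \<forall>y\<in>pcar P. (x,y) \<in> plt P \<longleftrightarrow> (h \<circ> f) x + 2 \<le> (h \<circ> f) y"
    using lt q(6) fQ by auto
  moreover have "\<forall>x\<in>pcar P. \<forall>y\<in>pcar P. (x,y) \<in> pev P \<longleftrightarrow> odd ((h \<circ> f) x) \<and> ((h \<circ> f) y = (h \<circ> f) x + 1 \<or> (h \<circ> f) y = (h \<circ> f) x - 1)"
    using ev q(7) fQ by auto
  ultimately show ?thesis using q(1) unfolding rd_def by blast
qed

lemma iso_sym:
  assumes V: "is_ipomset P" and I: "ipomset_iso P Q"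
  shows "ipomset_iso Q P"
proof -
  obtain f where f: "bij_betw f (pcar P) (pcar Q)"
    and lab: "\<forall>x\<in>pcar P. plab Q (f x) = plab P x"
    and lt: "\<forall>x\<in>pcar P. \<forall>y\<in>pcar P. (f x, f y) \<in> plt Q \<longleftrightarrow> (x,y) \<in> plt P"
    and ev: "\<forall>x\<in>pcar P. \<forall>y\<in>pcar P. (f x, f y) \<in> pev Q \<longleftrightarrow> (x,y) \<in> pev P"
    and sr: "f ` psrc P = psrc Q" and tg: "f ` ptgt P = ptgt Q"
    using I unfolding ipomset_iso_def by (elim exE conjE) (rule that, assumption+)
  define g where "g = inv_into (pcar P) f"
  have g: "bij_betw g (pcar Q) (pcar P)" unfolding g_def by (rule bij_betw_inv_into[OF f])
  have fg: "\<And>u. u \<in> pcar Q \<Longrightarrow> f (g u) = u" unfolding g_def using f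
    by (simp add: bij_betw_def f_inv_into_f)
  have gQ: "\<And>u. u \<in> pcar Q \<Longrightarrow> g u \<in> pcar P" using g by (auto simp: bij_betw_def)
  have sub: "psrc P \<subseteq> pcar P" "ptgt P \<subseteq> pcar P" using ipo[OF V] by auto
  have "\<forall>x\<in>pcar Q. plab P (g x) = plab Q x" using lab fg gQ by metis
  moreover have "\<forall>x\<in>pcar Q. \<forall>y\<in>pcar Q. (g x, g y) \<in> plt P \<longleftrightarrow> (x,y) \<in> plt Q"
    using lt fg gQ by metis
  moreover have "\<forall>x\<in>pcar Q. \<forall>y\<in>pcar Q. (g x, g y) \<in> pev P \<longleftrightarrow> (x,y) \<in> pev Q"
    using ev fg gQ by metis
  moreover have "g ` psrc Q = psrc P" "g ` ptgt Q = ptgt P"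
    unfolding sr[symmetric] tg[symmetric] g_def using f sub
    by (auto simp: bij_betw_def inv_into_image_cancel)
  ultimately show ?thesis unfolding ipomset_iso_def using g by blast
qed

lemma Read_iso_back:
  assumes iso: "ipomset_iso X Y"
  shows "Read Y \<subseteq> Read X"
proof
  obtain f where f: "bij_betw f (pcar X) (pcar Y)"
    and lt: "\<forall>x\<in>pcar X. \<forall>y\<in>pcar X. (f x, f y) \<in> plt Y \<longleftrightarrow> (x,y) \<in> plt X"
    and ev: "\<forall>x\<in>pcar X. \<forall>y\<in>pcar X. (f x, f y) \<in> pev Y \<longleftrightarrow> (x,y) \<in> pev X"
    and sr: "f ` psrc X = psrc Y" and tg: "f ` ptgt X = ptgt Y"
    using iso unfolding ipomset_iso_def by (elim exE conjE) (rule that, assumption+)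
  fix p assume "p \<in> Read Y"
  then obtain s k s' k' h where "p = (s, s')" "rd Y s k s' k' h" unfolding Read_def by auto
  then show "p \<in> Read X" using rd_iso_back[OF f lt ev sr tg] unfolding Read_def by blast
qed

lemma Read_iso:
  assumes V: "is_ipomset P" and I: "ipomset_iso P Q"
  shows "Read P = Read Q"
  using Read_iso_back[OF I] Read_iso_back[OF iso_sym[OF V I]] by blast


fun ist :: "st \<Rightarrow> nat" where
  "ist SB = 0" | "ist SS2 = 1" | "ist (SM1 b) = 1" | "ist (SM2 b) = 2" | "ist SE1 = 1" | "ist SE = 0"

lemma card_Ic: "card (Ic s k) = ist s"
  by (cases s) auto

lemma finite_Ic[simp]: "finite (Ic s k)"
  by (cases s) auto

lemma ist_le2: "ist s \<le> 2"
  by (cases s) auto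

lemma rd_card:
  assumes V: "is_ipomset P" and r: "rd P s k s' k' h"
  shows "card (psrc P) = ist s" "card (ptgt P) = ist s'"
proof -
  note q = rdD[OF r]
  have sub: "psrc P \<subseteq> pcar P" "ptgt P \<subseteq> pcar P" using ipo[OF V] by auto
  have "card (psrc P) = card (h ` psrc P)" using q(2) sub by (metis card_image inj_on_subset)
  then show "card (psrc P) = ist s" using q(4) card_Ic by simp
  have "card (ptgt P) = card (h ` ptgt P)" using q(2) sub by (metis card_image inj_on_subset)
  then show "card (ptgt P) = ist s'" using q(5) card_Ic by simp
qed

lemma Read_card:
  assumes V: "is_ipomset P" and r: "(s, s') \<in> Read P"
  shows "card (psrc P) = ist s" "card (ptgt P) = ist s'"
  using r rd_card[OF V] unfolding Read_def by auto

definition St :: "nat \<Rightarrow> st set" where "St n = {s. ist s = n}"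

fun anc :: "st \<Rightarrow> int" where
  "anc (SM1 b) = (if b then 1 else 2)" | "anc (SM2 b) = (if b then 1 else 2)" | "anc _ = 1"

lemma ok_anc: "ok s (anc s)"
  by (cases s) auto

lemma tr_refl: "ok s k \<Longrightarrow> tr s k s k"
  unfolding tr_def restr_def by (cases s) auto

lemma Seg_refl: "Seg s k s k = Ic s k"
  using LfIc_disj[of s k] unfolding Seg_def by auto

lemma Read_id:
  assumes U: "is_conclist U"
  shows "Read (id_pom U) = Id_on (St (card (cl_car U)))"
proof
  have fin: "finite (cl_car U)" using U unfolding is_conclist_def by auto
  show "Read (id_pom U) \<subseteq> Id_on (St (card (cl_car U)))"
  proof
    fix p assume "p \<in> Read (id_pom U)"
    then obtain s k s' k' h where p: "p = (s, s')" "rd (id_pom U) s k s' k' h" unfolding Read_def by auto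
    note q = rdD[OF p(2)]
    have e: "Seg s k s' k' = Ic s k" "Seg s k s' k' = Ic s' k'"
      using q(3,4,5) by (auto simp: id_pom_def)
    then have "Ic s k = Ic s' k'" by simp
    then have "s = s'" using tr_id[OF q(1) e(2)] by blast
    moreover have "card (cl_car U) = ist s"
    proof -
      have "inj_on h (cl_car U)" "h ` cl_car U = Ic s k" using q(2,4) by (auto simp: id_pom_def)
      then show ?thesis using card_Ic[of s k] card_image by metis
    qed
    ultimately show "p \<in> Id_on (St (card (cl_car U)))" using p St_def by auto
  qed
  show "Id_on (St (card (cl_car U))) \<subseteq> Read (id_pom U)"
  proof
    fix p assume "p \<in> Id_on (St (card (cl_car U)))"
    then obtain s where p: "p = (s, s)" and c: "ist s = card (cl_car U)" unfolding St_def by auto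
    define k where "k = anc s"
    have ok: "ok s k" unfolding k_def by (rule ok_anc)
    have irr: "\<And>x. (x, x) \<notin> cl_ord U" using U unfolding is_conclist_def irrefl_def by auto
    have asym: "\<And>x y. (x, y) \<in> cl_ord U \<Longrightarrow> (y, x) \<notin> cl_ord U"
      using U irr unfolding is_conclist_def trans_def by blast
    have tot: "\<And>x y. x \<in> cl_car U \<Longrightarrow> y \<in> cl_car U \<Longrightarrow> x \<noteq> y \<Longrightarrow> (x, y) \<in> cl_ord U \<or> (y, x) \<in> cl_ord U"
      using U unfolding is_conclist_def by auto
    have ordsub: "cl_ord U \<subseteq> cl_car U \<times> cl_car U" using U unfolding is_conclist_def by auto
    have cI: "card (Ic s k) = card (cl_car U)" using c card_Ic by simp
    obtain h where hb: "bij_betw h (cl_car U) (Ic s k)"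
      and hev: "\<forall>x\<in>cl_car U. \<forall>y\<in>cl_car U. (x, y) \<in> cl_ord U \<longleftrightarrow> odd (h x) \<and> (h y = h x + 1 \<or> h y = h x - 1)"
    proof (cases "ist s = 2")
      case True
      then obtain b where sb: "s = SM2 b" by (cases s) auto
      have "card (cl_car U) = 2" using c True by simp
      then obtain u v where uv: "cl_car U = {u, v}" "u \<noteq> v" by (meson card_2_iff)
      then have "(u, v) \<in> cl_ord U \<or> (v, u) \<in> cl_ord U" using tot by auto
      then obtain a b' where ab: "cl_car U = {a, b'}" "a \<noteq> b'" "(a, b') \<in> cl_ord U"
        using uv by (metis insert_commute)
      define ko where "ko = (if odd k then k else k + 1)"
      define ke where "ke = (if odd k then k + 1 else k)"
      define h where "h x = (if x = a then ko else ke)" for x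
      have Ik: "Ic s k = {ko, ke}" using sb ko_def ke_def by auto
      have "bij_betw h (cl_car U) (Ic s k)"
        unfolding bij_betw_def inj_on_def h_def Ik ab(1) using ab(2) ko_def ke_def by auto
      moreover have "\<forall>x\<in>cl_car U. \<forall>y\<in>cl_car U. (x, y) \<in> cl_ord U \<longleftrightarrow> odd (h x) \<and> (h y = h x + 1 \<or> h y = h x - 1)"
        unfolding ab(1) h_def using ab(2,3) asym irr ko_def ke_def by (auto simp: even_add)
      ultimately show thesis by (rule that)
    next
      case False
      have "card (cl_car U) \<le> 1" using c False ist_le2[of s] by simp
      then have cs: "cl_car U = {} \<or> (\<exists>u. cl_car U = {u})" using fin
        by (metis card_0_eq card_1_singletonE le_Suc_eq le_zero_eq One_nat_def)
      have "card (Ic s k) \<le> 1" using cI \<open>card (cl_car U) \<le> 1\<close> by simp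
      show thesis
      proof (cases "cl_car U = {}")
        case True
        then have "Ic s k = {}" using cI by (simp add: card_eq_0_iff)
        then show thesis using that[of "\<lambda>_. 0"] True by (simp add: bij_betw_def)
      next
        case False
        then obtain u where u: "cl_car U = {u}" using cs by auto
        then have "card (Ic s k) = 1" using cI by simp
        then obtain w where w: "Ic s k = {w}" by (meson card_1_singletonE)
        show thesis by (rule that[of "\<lambda>_. w"]) (use u w irr in \<open>auto simp: bij_betw_def\<close>)
      qed
    qed
    have "rd (id_pom U) s k s k h"
      unfolding rd_def
    proof (intro conjI ballI)
      show "tr s k s k" using tr_refl[OF ok] .
      show "bij_betw h (pcar (id_pom U)) (Seg s k s k)" using hb by (simp add: id_pom_def Seg_refl)
      show "h ` psrc (id_pom U) = Ic s k" "h ` ptgt (id_pom U) = Ic s k"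
        using hb by (simp_all add: id_pom_def bij_betw_def)
      fix x y assume xy: "x \<in> pcar (id_pom U)" "y \<in> pcar (id_pom U)"
      have hx: "h x \<in> Ic s k" "h y \<in> Ic s k" using hb xy by (auto simp: id_pom_def bij_betw_def)
      have "\<not> h x + 2 \<le> h y" using hx by (cases s) auto
      then show "((x, y) \<in> plt (id_pom U)) = (h x + 2 \<le> h y)" by (simp add: id_pom_def)
      show "((x, y) \<in> pev (id_pom U)) = (odd (h x) \<and> (h y = h x + 1 \<or> h y = h x - 1))"
        using hev xy by (simp add: id_pom_def)
    qed
    then show "p \<in> Read (id_pom U)" using p unfolding Read_def by blast
  qed
qed


fun rank :: "st \<Rightarrow> nat" where
  "rank SB = 0" | "rank SS2 = 1" | "rank (SM1 b) = 2" | "rank (SM2 b) = 2" | "rank SE1 = 3" | "rank SE = 4"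

definition isM :: "st \<Rightarrow> bool" where "isM s \<longleftrightarrow> (\<exists>b. s = SM1 b \<or> s = SM2 b)"

lemma rank2: "rank s = 2 \<longleftrightarrow> isM s"
  unfolding isM_def by (cases s) auto

lemma tr_rank: assumes "tr s k s' k'" shows "rank s \<le> rank s'"
proof (cases "s' = SB \<or> s' = SS2")
  case True
  then have s: "s = SB \<or> s = SS2" using tr_to_SB assms by blast
  show ?thesis
  proof (cases "s = SS2 \<and> s' = SB")
    case True
    then have "2 \<in> LI s k" "k = 1" "k' = 1" using assms unfolding tr_def by auto
    then have "2 \<in> LI s' k'" using assms unfolding tr_def by auto
    then show ?thesis using True \<open>k' = 1\<close> by simp
  next
    case False then show ?thesis using s True by auto
  qed
next
  case False
  have "restr s k s' k'" using assms unfolding tr_def by auto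
  then show ?thesis using False by (cases s; cases s') (auto simp: restr_def)
qed

lemma Read_rank: "(s, s') \<in> Read P \<Longrightarrow> rank s \<le> rank s'"
  unfolding Read_def using tr_rank rdD(1) by blast

lemma Read_idshape:
  assumes "psrc P = pcar P" "ptgt P = pcar P" "(s, s') \<in> Read P"
  shows "s = s'"
proof -
  obtain k k' h where r: "rd P s k s' k' h" using assms(3) unfolding Read_def by auto
  note q = rdD[OF r]
  have e: "Seg s k s' k' = Ic s k" "Seg s k s' k' = Ic s' k'" using q(3,4,5) assms(1,2) by auto
  then have "Ic s k = Ic s' k'" by simp
  then show ?thesis using tr_id[OF q(1) e(2)] by blast
qed

lemma parity_intr:
  assumes r: "rd P s k t l h" and x: "x \<in> pcar P" and y: "y \<in> pcar P"
    and d: "h y = h x + 1 \<or> h y = h x - 1"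
  shows "odd (h x) \<longleftrightarrow> (\<exists>z\<in>pcar P. (x, z) \<in> pev P)"
  using rdD(7)[OF r x] rdD(7)[OF r x y] d y by auto

lemma seg_pre: "rd P s k t l h \<Longrightarrow> v \<in> Seg s k t l \<Longrightarrow> \<exists>x\<in>pcar P. h x = v"
  using rdD(3) by (metis imageE)

definition Qy :: "'a ipomset \<Rightarrow> nat \<Rightarrow> bool" where
  "Qy P y \<longleftrightarrow> y \<in> psrc P \<and> ((\<exists>z\<in>pcar P - psrc P. (y, z) \<notin> plt P \<and> (z, y) \<notin> plt P)
      \<or> (pcar P = psrc P \<and> y \<in> ptgt P))"

fun topM :: "st \<Rightarrow> int \<Rightarrow> int" where
  "topM (SM1 b) l = l" | "topM (SM2 b) l = l + 1" | "topM _ l = l"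

lemma M_LI: "isM t \<Longrightarrow> LI t l = {..topM t l}"
  unfolding isM_def by auto

lemma M_Ic_ne: "isM t \<Longrightarrow> Ic t l \<noteq> {}"
  unfolding isM_def by auto

lemma M_Seg:
  assumes "isM s" "isM t"
  shows "Seg s k t l = {k..topM t l}"
  using assms M_LI[OF assms(2)] unfolding Seg_LI isM_def by auto

lemma inj_single: "inj_on h A \<Longrightarrow> B \<subseteq> A \<Longrightarrow> x \<in> A \<Longrightarrow> h ` B = h ` {x} \<Longrightarrow> B = {x}"
  using inj_on_image_eq_iff by (metis empty_subsetI insert_subset)

lemma M1_char:
  assumes V: "is_ipomset P" and nid: "\<not> (psrc P = pcar P \<and> ptgt P = pcar P)"
    and r: "rd P (SM1 b) k t l h" and t: "isM t"
  shows "\<exists>x. psrc P = {x} \<and> (b \<longleftrightarrow> (\<exists>z\<in>pcar P. (x, z) \<in> pev P))"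
proof -
  note q = rdD[OF r]
  have sub: "psrc P \<subseteq> pcar P" "ptgt P \<subseteq> pcar P" using ipo[OF V] by auto
  have hs: "h ` psrc P = {k}" using q(4) by simp
  then obtain x where x: "x \<in> psrc P" "h x = k" by (metis imageE insertI1)
  have src: "psrc P = {x}"
  proof
    show "psrc P \<subseteq> {x}"
    proof
      fix y assume "y \<in> psrc P"
      then have "h y = k" using hs by blast
      then show "y \<in> {x}" using q(2) x sub \<open>y \<in> psrc P\<close> by (auto dest: inj_onD)
    qed
  qed (use x in auto)
  have okb: "b \<longleftrightarrow> odd k" using q(1) unfolding tr_def by auto
  have Sg: "Seg (SM1 b) k t l = {k..topM t l}" using M_Seg t by (auto simp: isM_def)
  have kin: "k \<in> Seg (SM1 b) k t l" using Ic_Seg1[OF q(1)] by auto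
  have "k + 1 \<le> topM t l"
  proof (rule ccontr)
    assume "\<not> k + 1 \<le> topM t l"
    then have "Seg (SM1 b) k t l = {k}" using Sg kin by auto
    then have car: "h ` pcar P = {k}" using q(3) by simp
    have pc: "pcar P = {x}"
    proof
      show "pcar P \<subseteq> {x}"
      proof
        fix y assume y: "y \<in> pcar P"
        then have "h y = k" using car by blast
        then show "y \<in> {x}" using q(2) x sub y by (auto dest: inj_onD)
      qed
    qed (use x sub in auto)
    have "ptgt P \<noteq> {}" by (metis M_Ic_ne[OF t] image_empty q(5))
    then have "ptgt P = pcar P" using sub pc by auto
    then show False using nid src pc by auto
  qed
  then have "k + 1 \<in> Seg (SM1 b) k t l" using Sg by auto
  then obtain y where y: "y \<in> pcar P" "h y = k + 1" using seg_pre[OF r] by blast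
  have "odd (h x) \<longleftrightarrow> (\<exists>z\<in>pcar P. (x, z) \<in> pev P)"
    by (rule parity_intr[OF r]) (use x y sub in auto)
  then show ?thesis using src okb x by auto
qed

lemma M2_char:
  assumes V: "is_ipomset P" and nid: "\<not> (psrc P = pcar P \<and> ptgt P = pcar P)"
    and r: "rd P (SM2 b) k t l h" and t: "isM t"
  shows "\<exists>x0 x1. psrc P = {x0, x1} \<and> x0 \<noteq> x1 \<and> Qy P x1 \<and> \<not> Qy P x0
     \<and> (b \<longleftrightarrow> \<not> (\<exists>z\<in>pcar P. (x1, z) \<in> pev P))"
proof -
  note q = rdD[OF r]
  have sub: "psrc P \<subseteq> pcar P" "ptgt P \<subseteq> pcar P" using ipo[OF V] by auto
  have hs: "h ` psrc P = {k, k + 1}" using q(4) by simp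
  then obtain x0 x1 where x: "x0 \<in> psrc P" "h x0 = k" "x1 \<in> psrc P" "h x1 = k + 1"
    by (metis imageE insertI1 insertI2 singletonI)
  have ne: "x0 \<noteq> x1" using x by auto
  have hinj: "\<And>u v. u \<in> pcar P \<Longrightarrow> v \<in> pcar P \<Longrightarrow> h u = h v \<Longrightarrow> u = v"
    using q(2) by (auto dest: inj_onD)
  have src: "psrc P = {x0, x1}"
  proof
    show "psrc P \<subseteq> {x0, x1}"
    proof
      fix y assume y: "y \<in> psrc P"
      then have "h y = k \<or> h y = k + 1" using hs by blast
      moreover have yP: "y \<in> pcar P" using sub y by auto
      moreover have "x0 \<in> pcar P" "x1 \<in> pcar P" using x sub by auto
      ultimately show "y \<in> {x0, x1}" using hinj[OF yP, of x0] hinj[OF yP, of x1] x by auto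
    qed
  qed (use x in auto)
  have okb: "b \<longleftrightarrow> odd k" using q(1) unfolding tr_def by auto
  have Sg: "Seg (SM2 b) k t l = {k..topM t l}" using M_Seg t by (auto simp: isM_def)
  have k1in: "k + 1 \<in> Seg (SM2 b) k t l" using Ic_Seg1[OF q(1)] by auto
  have Q: "Qy P x1 \<and> \<not> Qy P x0"
  proof (cases "k + 2 \<le> topM t l")
    case True
    then have "k + 2 \<in> Seg (SM2 b) k t l" using Sg by auto
    then obtain z where z: "z \<in> pcar P" "h z = k + 2" using seg_pre[OF r] by blast
    have zs: "z \<notin> psrc P" using src x z by auto
    have "(x1, z) \<notin> plt P" "(z, x1) \<notin> plt P" using q(6)[of x1 z] q(6)[of z x1] x z sub by auto
    then have Q1: "Qy P x1" unfolding Qy_def using x z zs by blast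
    have "\<not> Qy P x0"
    proof
      assume "Qy P x0"
      moreover have "\<forall>z'\<in>pcar P - psrc P. (x0, z') \<in> plt P"
      proof
        fix z' assume z': "z' \<in> pcar P - psrc P"
        then have "h z' \<in> Seg (SM2 b) k t l" using q(3) by auto
        moreover have "x0 \<in> pcar P" "x1 \<in> pcar P" using x sub by auto
        moreover have "h z' \<noteq> k" "h z' \<noteq> k + 1" using z' x hinj[of z' x0] hinj[of z' x1] calculation(2,3) by auto
        ultimately have "k + 2 \<le> h z'" using Sg by auto
        then show "(x0, z') \<in> plt P" using q(6)[of x0 z'] x z' sub by auto
      qed
      ultimately show False unfolding Qy_def using z zs by blast
    qed
    then show ?thesis using Q1 by blast
  next
    case False
    have kin: "k \<in> Seg (SM2 b) k t l" using Ic_Seg1[OF q(1)] by auto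
    have tp: "topM t l = k + 1" using Sg False k1in by auto
    have Seq: "Seg (SM2 b) k t l = {k, k + 1}" unfolding Sg tp by auto
    have pc: "pcar P = psrc P"
    proof
      show "pcar P \<subseteq> psrc P"
      proof
        fix y assume y: "y \<in> pcar P"
        then have "h y \<in> {k, k + 1}" using q(3) Seq by auto
        moreover have "x0 \<in> pcar P" "x1 \<in> pcar P" using x sub by auto
        ultimately show "y \<in> psrc P" using hinj[OF y, of x0] hinj[OF y, of x1] x by auto
      qed
    qed (use sub in auto)
    have LIt: "LI t l = {..k + 1}"
      using M_LI[OF t] tp by simp
    have tgt: "ptgt P = {x1}"
    proof -
      obtain c where "t = SM1 c \<or> t = SM2 c" using t unfolding isM_def by auto
      then show ?thesis
      proof
        assume tc: "t = SM1 c"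
        then have "l = k + 1" using LIt by simp
        then have "h ` ptgt P = {k + 1}" using q(5) tc by simp
        then have "h ` ptgt P = h ` {x1}" using x by simp
        then show ?thesis using inj_single[OF q(2)] sub x by blast
      next
        assume tc: "t = SM2 c"
        then have "l = k" using LIt by simp
        then have "h ` ptgt P = {k, k + 1}" using q(5) tc by simp
        then have "h ` ptgt P = h ` psrc P" using hs by simp
        then have "ptgt P = psrc P" using inj_on_image_eq_iff[OF q(2)] sub by blast
        then show ?thesis using pc nid by auto
      qed
    qed
    have "Qy P x1" unfolding Qy_def using x pc tgt by auto
    moreover have "\<not> Qy P x0" unfolding Qy_def using pc tgt ne by auto
    ultimately show ?thesis by blast
  qed
  have "odd (h x1) \<longleftrightarrow> (\<exists>z\<in>pcar P. (x1, z) \<in> pev P)"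
    by (rule parity_intr[OF r, of x1 x0]) (use x sub in auto)
  then have "b \<longleftrightarrow> \<not> (\<exists>z\<in>pcar P. (x1, z) \<in> pev P)" using okb x by (auto simp: even_add)
  then show ?thesis using src ne Q by blast
qed

definition PhiM :: "(st \<times> st) set \<Rightarrow> bool" where
  "PhiM R \<longleftrightarrow> (\<forall>(a, b)\<in>R. isM a \<and> isM b \<longrightarrow> a = b) \<or> (\<exists>c. \<forall>(a, b)\<in>R. isM a \<and> isM b \<longrightarrow> a = c)"

lemma src_unique:
  assumes V: "is_ipomset P" and nid: "\<not> (psrc P = pcar P \<and> ptgt P = pcar P)"
    and r1: "(s1, t1) \<in> Read P" and r2: "(s2, t2) \<in> Read P"
    and M: "isM s1" "isM t1" "isM s2" "isM t2"
  shows "s1 = s2"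
proof -
  obtain k1 l1 h1 where q1: "rd P s1 k1 t1 l1 h1" using r1 unfolding Read_def by auto
  obtain k2 l2 h2 where q2: "rd P s2 k2 t2 l2 h2" using r2 unfolding Read_def by auto
  have c: "ist s1 = ist s2" using rd_card(1)[OF V q1] rd_card(1)[OF V q2] by simp
  obtain b1 where b1: "s1 = SM1 b1 \<or> s1 = SM2 b1" using M(1) unfolding isM_def by auto
  obtain b2 where b2: "s2 = SM1 b2 \<or> s2 = SM2 b2" using M(3) unfolding isM_def by auto
  show ?thesis
  proof (cases "s1 = SM1 b1")
    case True
    then have T2: "s2 = SM1 b2" using b2 c by auto
    obtain x where x: "psrc P = {x}" "b1 \<longleftrightarrow> (\<exists>z\<in>pcar P. (x, z) \<in> pev P)"
      using M1_char[OF V nid q1[unfolded True] M(2)] by blast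
    obtain x' where x': "psrc P = {x'}" "b2 \<longleftrightarrow> (\<exists>z\<in>pcar P. (x', z) \<in> pev P)"
      using M1_char[OF V nid q2[unfolded T2] M(4)] by blast
    have "x = x'" using x x' by auto
    then show ?thesis using True T2 x x' by auto
  next
    case False
    then have T1: "s1 = SM2 b1" using b1 by auto
    then have T2: "s2 = SM2 b2" using b2 c by auto
    obtain x0 x1 where x: "psrc P = {x0, x1}" "x0 \<noteq> x1" "Qy P x1" "\<not> Qy P x0"
        "b1 \<longleftrightarrow> \<not> (\<exists>z\<in>pcar P. (x1, z) \<in> pev P)"
      using M2_char[OF V nid q1[unfolded T1] M(2)] by blast
    obtain y0 y1 where y: "psrc P = {y0, y1}" "y0 \<noteq> y1" "Qy P y1" "\<not> Qy P y0"
        "b2 \<longleftrightarrow> \<not> (\<exists>z\<in>pcar P. (y1, z) \<in> pev P)"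
      using M2_char[OF V nid q2[unfolded T2] M(4)] by blast
    have "y1 \<in> {x0, x1}" using x(1) y(1) by auto
    then have "y1 = x1" using x(4) y(3) by auto
    then show ?thesis using T1 T2 x y by auto
  qed
qed

lemma Read_PhiM:
  assumes V: "is_ipomset P"
  shows "PhiM (Read P)"
proof (cases "psrc P = pcar P \<and> ptgt P = pcar P")
  case True
  then show ?thesis unfolding PhiM_def using Read_idshape by blast
next
  case False
  show ?thesis
  proof (cases "\<exists>a b. (a, b) \<in> Read P \<and> isM a \<and> isM b")
    case True
    then obtain a b where ab: "(a, b) \<in> Read P" "isM a" "isM b" by blast
    have "\<forall>(a', b')\<in>Read P. isM a' \<and> isM b' \<longrightarrow> a' = a"
      using src_unique[OF V False] ab by blast
    then show ?thesis unfolding PhiM_def by blast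
  next
    case False
    then show ?thesis unfolding PhiM_def by blast
  qed
qed


lemma pev_P2n: "(a, b) \<in> pev (P2n n) \<longleftrightarrow> a \<in> {1..2*n} \<and> b \<in> {1..2*n} \<and> odd a \<and> (b = a + 1 \<or> b + 1 = a)"
proof
  assume "(a, b) \<in> pev (P2n n)"
  then have "(\<exists>i. a = i \<and> b = i + 1 \<and> odd i \<and> i + 1 \<le> 2*n) \<or> (\<exists>i. a = i + 2 \<and> b = i + 1 \<and> odd i \<and> i + 2 \<le> 2*n)"
    unfolding P2n_def by auto
  then show "a \<in> {1..2*n} \<and> b \<in> {1..2*n} \<and> odd a \<and> (b = a + 1 \<or> b + 1 = a)"
    by (auto elim!: oddE)
next
  assume a: "a \<in> {1..2*n} \<and> b \<in> {1..2*n} \<and> odd a \<and> (b = a + 1 \<or> b + 1 = a)"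
  show "(a, b) \<in> pev (P2n n)"
  proof (cases "b = a + 1")
    case True then show ?thesis using a unfolding P2n_def by auto
  next
    case False
    then have b: "b + 1 = a" using a by auto
    then have "a \<ge> 3" using a by (auto elim!: oddE)
    have "odd a" using a by simp
    then have "odd (a - 2)" using \<open>a \<ge> 3\<close> by presburger
    moreover have "a - 2 + 2 = a" "a - 2 + 1 = b" using \<open>a \<ge> 3\<close> b by auto
    ultimately have "odd (a - 2)" "a - 2 + 2 = a" "a - 2 + 1 = b" by auto
    then show ?thesis using a unfolding P2n_def by (auto intro!: exI[of _ "a - 2"])
  qed
qed

lemma rd_P2n:
  assumes n: "1 \<le> n"
  shows "rd (P2n n) SB 1 SE (2 * int n + 1) int"
proof -
  have t: "tr SB 1 SE (2 * int n + 1)" unfolding tr_def restr_def using n by auto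
  have sg: "Seg SB 1 SE (2 * int n + 1) = {1..int (2*n)}" unfolding Seg_def by auto
  have b: "bij_betw int (pcar (P2n n)) (Seg SB 1 SE (2 * int n + 1))"
    unfolding sg by (simp add: P2n_def bij_betw_def image_int_atLeastAtMost)
  show ?thesis unfolding rd_def
  proof (intro conjI ballI)
    fix x y assume xy: "x \<in> pcar (P2n n)" "y \<in> pcar (P2n n)"
    show "((x, y) \<in> plt (P2n n)) = (int x + 2 \<le> int y)" using xy by (auto simp: P2n_def)
    show "((x, y) \<in> pev (P2n n)) = (odd (int x) \<and> (int y = int x + 1 \<or> int y = int x - 1))"
      using xy unfolding pev_P2n by (auto simp: P2n_def)
  qed (use t b in \<open>auto simp: P2n_def\<close>)
qed

lemma rd_SBSE_iso:
  fixes P :: "unit ipomset"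
  assumes r: "rd P SB k SE k' h"
  shows "\<exists>n. ipomset_iso P (P2n n)"
proof -
  note q = rdD[OF r]
  have k: "k = 1" "odd k'" "3 \<le> k'" using q(1) unfolding tr_def restr_def by auto
  define n where "n = nat ((k' - 1) div 2)"
  have kn: "k' - 1 = int (2 * n)" using k unfolding n_def by (auto elim!: oddE)
  have sg: "Seg SB k SE k' = {1..int (2*n)}" unfolding Seg_def using k kn by auto
  define f where "f x = nat (h x)" for x
  have hf: "\<And>x. x \<in> pcar P \<Longrightarrow> h x = int (f x)"
    using q(3) sg f_def by force
  have fimg: "f ` pcar P = {1..2*n}"
  proof -
    have "int ` f ` pcar P = h ` pcar P" using hf by (auto simp: image_comp; metis hf image_eqI)
    also have "\<dots> = int ` {1..2*n}" using q(3) sg by (simp add: image_int_atLeastAtMost)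
    finally show ?thesis by (simp add: inj_image_eq_iff)
  qed
  have finj: "inj_on f (pcar P)"
    using q(2) hf by (auto simp: inj_on_def)
  have src: "psrc P = {}" "ptgt P = {}" using q(4,5) by auto
  have "bij_betw f (pcar P) (pcar (P2n n))" using finj fimg by (simp add: bij_betw_def P2n_def)
  moreover have "\<forall>x\<in>pcar P. \<forall>y\<in>pcar P. (f x, f y) \<in> plt (P2n n) \<longleftrightarrow> (x,y) \<in> plt P"
  proof (intro ballI)
    fix x y assume xy: "x \<in> pcar P" "y \<in> pcar P"
    have "f x \<in> {1..2*n}" "f y \<in> {1..2*n}" using fimg xy by auto
    then show "(f x, f y) \<in> plt (P2n n) \<longleftrightarrow> (x,y) \<in> plt P"
      using q(6)[OF xy] hf xy by (auto simp: P2n_def)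
  qed
  moreover have "\<forall>x\<in>pcar P. \<forall>y\<in>pcar P. (f x, f y) \<in> pev (P2n n) \<longleftrightarrow> (x,y) \<in> pev P"
  proof (intro ballI)
    fix x y assume xy: "x \<in> pcar P" "y \<in> pcar P"
    have "f x \<in> {1..2*n}" "f y \<in> {1..2*n}" using fimg xy by auto
    then show "(f x, f y) \<in> pev (P2n n) \<longleftrightarrow> (x,y) \<in> pev P"
      using q(7)[OF xy] hf xy unfolding pev_P2n by auto
  qed
  ultimately have "ipomset_iso P (P2n n)"
    unfolding ipomset_iso_def using src by (auto simp: P2n_def)
  then show ?thesis by blast
qed

lemma rd_SBSB_empty: "rd P SB k SB k' h \<Longrightarrow> pcar P = {}"
  using rdD(1)[of P SB k SB k' h] rdD(3)[of P SB k SB k' h] unfolding tr_def Seg_def by auto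

lemma empty_iso:
  fixes P :: "unit ipomset"
  assumes V: "is_ipomset P" and e: "pcar P = {}"
  shows "ipomset_iso P (P2n 0)"
proof -
  have "psrc P = {}" "ptgt P = {}" using ipo[OF V] e by auto
  then show ?thesis unfolding ipomset_iso_def using e by (auto simp: P2n_def bij_betw_def)
qed

lemma Read_empty:
  assumes V: "is_ipomset P" and e: "pcar P = {}"
  shows "Read P = Id_on (St 0)"
proof
  have se: "psrc P = pcar P" "ptgt P = pcar P" using ipo[OF V] e by auto
  show "Read P \<subseteq> Id_on (St 0)"
  proof
    fix p assume p: "p \<in> Read P"
    then obtain a b where ab: "p = (a, b)" by (cases p)
    then have "a = b" using Read_idshape[OF se] p by auto
    moreover have "ist a = 0" using Read_card(1)[OF V] p ab se e by fastforce
    ultimately show "p \<in> Id_on (St 0)" using ab St_def by auto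
  qed
  show "Id_on (St 0) \<subseteq> Read P"
  proof
    fix p assume "p \<in> Id_on (St 0)"
    then obtain a where a: "p = (a, a)" "ist a = 0" unfolding St_def by auto
    then have "Ic a (anc a) = {}" using card_Ic[of a "anc a"] by (simp add: card_eq_0_iff)
    then have "rd P a (anc a) a (anc a) h" for h
      unfolding rd_def using tr_refl[OF ok_anc] Seg_refl se e by (auto simp: bij_betw_def)
    then show "p \<in> Read P" unfolding Read_def using a by blast
  qed
qed


section \<open>The finite category\<close>

lemma UNIV_st: "(UNIV :: st set) = {SB, SS2, SM1 True, SM1 False, SM2 True, SM2 False, SE1, SE}"
proof -
  have "x \<in> {SB, SS2, SM1 True, SM1 False, SM2 True, SM2 False, SE1, SE}" for x
    by (cases x) auto
  then show ?thesis by blast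
qed

instance st :: finite
  by standard (simp add: UNIV_st)

lemma finite_rel[simp]: "finite (R :: (st \<times> st) set)"
  by (rule finite_subset[of _ UNIV]) auto

fun stn :: "st \<Rightarrow> nat" where
  "stn SB = 0" | "stn SS2 = 1" | "stn (SM1 b) = (if b then 2 else 3)" | "stn (SM2 b) = (if b then 4 else 5)"
| "stn SE1 = 6" | "stn SE = 7"

lemma inj_stn: "inj stn"
proof (rule injI)
  fix x y show "stn x = stn y \<Longrightarrow> x = y" by (cases x; cases y) (auto split: if_splits)
qed

definition pcode :: "st \<times> st \<Rightarrow> nat" where "pcode p = prod_encode (stn (fst p), stn (snd p))"

lemma inj_pcode: "inj pcode"
  unfolding pcode_def inj_def using inj_stn inj_prod_encode
  by (metis inj_eq prod.collapse prod.inject)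

definition enc :: "nat \<times> nat \<times> (st \<times> st) set \<Rightarrow> nat" where
  "enc t = prod_encode (fst t, prod_encode (fst (snd t), set_encode (pcode ` snd (snd t))))"

lemma inj_enc: "inj enc"
proof (rule injI)
  fix t u assume e: "enc t = enc u"
  obtain a b R where t: "t = (a, b, R)" by (cases t) auto
  obtain a' b' R' where u: "u = (a', b', R')" by (cases u) auto
  have "a = a'" "b = b'" "set_encode (pcode ` R) = set_encode (pcode ` R')"
    using e unfolding enc_def t u by (auto dest: inj_onD[OF inj_prod_encode])
  then have "pcode ` R = pcode ` R'" by (simp add: set_encode_eq)
  then have "R = R'" using inj_pcode by (simp add: inj_image_eq_iff)
  then show "t = u" using t u \<open>a = a'\<close> \<open>b = b'\<close> by simp
qed

definition Phi :: "(st \<times> st) set \<Rightarrow> bool" where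
  "Phi R \<longleftrightarrow> (\<forall>(a, b)\<in>R. rank a \<le> rank b) \<and> PhiM R"

definition MT :: "(nat \<times> nat \<times> (st \<times> st) set) set" where
  "MT = {(o1, o2, R). o1 \<le> 3 \<and> o2 \<le> 3 \<and> R \<subseteq> St o1 \<times> St o2 \<and> Phi R}"

lemma rank_eq: "rank a = rank b \<Longrightarrow> a \<noteq> b \<Longrightarrow> isM a \<and> isM b"
  unfolding isM_def by (cases a; cases b) auto

lemma Phi_comp: "Phi R1 \<Longrightarrow> Phi R2 \<Longrightarrow> Phi (R1 O R2)"
proof -
  assume p1: "Phi R1" and p2: "Phi R2"
  have r1: "\<And>a b. (a, b) \<in> R1 \<Longrightarrow> rank a \<le> rank b" and r2: "\<And>a b. (a, b) \<in> R2 \<Longrightarrow> rank a \<le> rank b"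
    using p1 p2 unfolding Phi_def by auto
  have rk: "\<forall>(a, b)\<in>R1 O R2. rank a \<le> rank b"
  proof (clarify)
    fix x y z assume "(x, y) \<in> R1" "(y, z) \<in> R2"
    then show "rank x \<le> rank z" using r1 r2 by (meson le_trans)
  qed
  have mid: "isM v" if "(a, v) \<in> R1" "(v, b) \<in> R2" "isM a" "isM b" for a v b
  proof -
    have "rank a = 2" "rank b = 2" using that rank2 by auto
    then have "rank v = 2" using r1[OF that(1)] r2[OF that(2)] by auto
    then show ?thesis using rank2 by auto
  qed
  have m1: "PhiM R1" and m2: "PhiM R2" using p1 p2 unfolding Phi_def by auto
  have "PhiM (R1 O R2)"
  proof (cases "\<exists>c. \<forall>(a, b)\<in>R1. isM a \<and> isM b \<longrightarrow> a = c")
    case True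
    then obtain c where c: "\<forall>(a, b)\<in>R1. isM a \<and> isM b \<longrightarrow> a = c" by blast
    have "\<forall>(a, b)\<in>R1 O R2. isM a \<and> isM b \<longrightarrow> a = c" using c mid by blast
    then show ?thesis unfolding PhiM_def by blast
  next
    case False
    then have d1: "\<forall>(a, b)\<in>R1. isM a \<and> isM b \<longrightarrow> a = b" using m1 unfolding PhiM_def by blast
    show ?thesis
    proof (cases "\<forall>(a, b)\<in>R2. isM a \<and> isM b \<longrightarrow> a = b")
      case True
      then have "\<forall>(a, b)\<in>R1 O R2. isM a \<and> isM b \<longrightarrow> a = b" using d1 mid by fastforce
      then show ?thesis unfolding PhiM_def by blast
    next
      case False
      then obtain c where c: "\<forall>(a, b)\<in>R2. isM a \<and> isM b \<longrightarrow> a = c" using m2 unfolding PhiM_def by blast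
      have "\<forall>(a, b)\<in>R1 O R2. isM a \<and> isM b \<longrightarrow> a = c" using c d1 mid by fastforce
      then show ?thesis unfolding PhiM_def by blast
    qed
  qed
  then show ?thesis using rk unfolding Phi_def by blast
qed

lemma Phi_Id: "Phi (Id_on X)"
  unfolding Phi_def PhiM_def by auto

lemma MT_comp: "(o1, o2, R1) \<in> MT \<Longrightarrow> (o2, o3, R2) \<in> MT \<Longrightarrow> (o1, o3, R1 O R2) \<in> MT"
  unfolding MT_def using Phi_comp by blast

lemma MT_Id: "o1 \<le> 3 \<Longrightarrow> (o1, o1, Id_on (St o1)) \<in> MT"
  unfolding MT_def using Phi_Id by blast

lemma finite_MT: "finite MT"
proof (rule finite_subset)
  show "MT \<subseteq> {0..3} \<times> {0..3} \<times> (UNIV :: (st \<times> st) set set)" unfolding MT_def by auto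
  show "finite ({0..3::nat} \<times> {0..3::nat} \<times> (UNIV :: (st \<times> st) set set))"
    by simp
qed

definition dec :: "nat \<Rightarrow> nat \<times> nat \<times> (st \<times> st) set" where "dec = inv enc"

lemma dec_enc[simp]: "dec (enc t) = t"
  unfolding dec_def using inj_enc by simp

definition Cat :: fcat where
  "Cat = \<lparr>Ob = {0..3}, Mor = enc ` MT, cdom = (\<lambda>m. fst (dec m)), ccod = (\<lambda>m. fst (snd (dec m))),
     cid = (\<lambda>o1. enc (o1, o1, Id_on (St o1))),
     ccomp = (\<lambda>f g. enc (fst (dec f), fst (snd (dec g)), snd (snd (dec f)) O snd (snd (dec g))))\<rparr>"

lemma Cat_simps: "Ob Cat = {0..3}" "Mor Cat = enc ` MT" "cdom Cat m = fst (dec m)"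
  "ccod Cat m = fst (snd (dec m))" "cid Cat o1 = enc (o1, o1, Id_on (St o1))"
  "ccomp Cat f g = enc (fst (dec f), fst (snd (dec g)), snd (snd (dec f)) O snd (snd (dec g)))"
  unfolding Cat_def by simp_all

lemma finite_Cat: "finite_category Cat"
  unfolding finite_category_def Cat_simps
proof (intro conjI ballI impI)
  show "finite {0..3::nat}" by simp
  show "finite (enc ` MT)" using finite_MT by simp
next
  fix f assume "f \<in> enc ` MT"
  then obtain a b R where t: "f = enc (a, b, R)" "(a, b, R) \<in> MT" by auto
  then show "fst (dec f) \<in> {0..3}" "fst (snd (dec f)) \<in> {0..3}" unfolding MT_def by auto
  have sub: "R \<subseteq> St a \<times> St b" using t unfolding MT_def by auto
  have "Id_on (St a) O R = R" "R O Id_on (St b) = R" using sub by auto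
  then show "enc (fst (dec (enc (fst (dec f), fst (dec f), Id_on (St (fst (dec f)))))),
          fst (snd (dec f)), snd (snd (dec (enc (fst (dec f), fst (dec f), Id_on (St (fst (dec f))))))) O snd (snd (dec f))) = f"
    "enc (fst (dec f), fst (snd (dec (enc (fst (snd (dec f)), fst (snd (dec f)), Id_on (St (fst (snd (dec f)))))))),
          snd (snd (dec f)) O snd (snd (dec (enc (fst (snd (dec f)), fst (snd (dec f)), Id_on (St (fst (snd (dec f))))))))) = f"
    using t by simp_all
next
  fix x :: nat assume "x \<in> {0..3}"
  then show "enc (x, x, Id_on (St x)) \<in> enc ` MT" using MT_Id by auto
  show "fst (dec (enc (x, x, Id_on (St x)))) = x" "fst (snd (dec (enc (x, x, Id_on (St x))))) = x" by simp_all
next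
  fix f g assume f: "f \<in> enc ` MT" and g: "g \<in> enc ` MT" and c: "fst (snd (dec f)) = fst (dec g)"
  obtain a b R where t: "f = enc (a, b, R)" "(a, b, R) \<in> MT" using f by auto
  obtain a' b' R' where u: "g = enc (a', b', R')" "(a', b', R') \<in> MT" using g by auto
  have "b = a'" using c t u by simp
  then have "(a, b', R O R') \<in> MT" using MT_comp t u by blast
  then show "enc (fst (dec f), fst (snd (dec g)), snd (snd (dec f)) O snd (snd (dec g))) \<in> enc ` MT"
    using t u by simp
  show "fst (dec (enc (fst (dec f), fst (snd (dec g)), snd (snd (dec f)) O snd (snd (dec g))))) = fst (dec f)"
    by simp
  show "fst (snd (dec (enc (fst (dec f), fst (snd (dec g)), snd (snd (dec f)) O snd (snd (dec g)))))) =
    fst (snd (dec g))" by simp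
next
  fix f g h assume f: "f \<in> enc ` MT" and g: "g \<in> enc ` MT" and h: "h \<in> enc ` MT"
  show "enc (fst (dec (enc (fst (dec f), fst (snd (dec g)), snd (snd (dec f)) O snd (snd (dec g))))),
          fst (snd (dec h)), snd (snd (dec (enc (fst (dec f), fst (snd (dec g)), snd (snd (dec f)) O snd (snd (dec g)))))) O snd (snd (dec h))) =
        enc (fst (dec f), fst (snd (dec (enc (fst (dec g), fst (snd (dec h)), snd (snd (dec g)) O snd (snd (dec h)))))),
          snd (snd (dec f)) O snd (snd (dec (enc (fst (dec g), fst (snd (dec h)), snd (snd (dec g)) O snd (snd (dec h)))))))"
    by (simp add: O_assoc)
qed


definition pot :: "st \<Rightarrow> st \<Rightarrow> nat" where
  "pot c u = 2 * rank u + (if isM u \<and> u \<noteq> c then 1 else 0)"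

lemma rank_le4: "rank u \<le> 4" by (cases u) auto

lemma pot_le: "pot c u \<le> 9"
  unfolding pot_def using rank_le4[of u] by auto

lemma pot_exists:
  assumes "Phi R"
  shows "\<exists>c. \<forall>(a, b)\<in>R. a \<noteq> b \<longrightarrow> pot c a < pot c b"
proof -
  have rk: "\<And>a b. (a, b) \<in> R \<Longrightarrow> rank a \<le> rank b" using assms unfolding Phi_def by auto
  have m: "PhiM R" using assms unfolding Phi_def by auto
  obtain c where c: "\<forall>(a, b)\<in>R. isM a \<and> isM b \<and> a \<noteq> b \<longrightarrow> a = c"
    using m unfolding PhiM_def by blast
  have "\<forall>(a, b)\<in>R. a \<noteq> b \<longrightarrow> pot c a < pot c b"
  proof (clarify)
    fix a b assume ab: "(a, b) \<in> R" "a \<noteq> b"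
    show "pot c a < pot c b"
    proof (cases "rank a = rank b")
      case True
      then have "isM a \<and> isM b" using rank_eq ab by blast
      then have "a = c" using c ab by blast
      then show ?thesis using ab \<open>isM a \<and> isM b\<close> True unfolding pot_def by auto
    next
      case False
      then have "rank a < rank b" using rk[OF ab(1)] by auto
      then show ?thesis unfolding pot_def by auto
    qed
  qed
  then show ?thesis by blast
qed

lemma path_bound:
  assumes c: "\<forall>(a, b)\<in>R. a \<noteq> b \<longrightarrow> pot c a < pot c b"
    and p: "\<forall>i<n. (f i, f (Suc i)) \<in> R \<and> f i \<noteq> f (Suc i)"
  shows "n + pot c (f 0) \<le> pot c (f n)"
  using p
proof (induction n)
  case 0 then show ?case by simp
next
  case (Suc n)
  then have "n + pot c (f 0) \<le> pot c (f n)" by auto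
  moreover have "pot c (f n) < pot c (f (Suc n))" using Suc.prems c by auto
  ultimately show ?case by simp
qed

lemma loop_step:
  assumes "Phi R" "\<forall>i<n. (f i, f (Suc i)) \<in> R" "10 \<le> n"
  shows "\<exists>i<n. f i = f (Suc i)"
proof (rule ccontr)
  assume "\<not> (\<exists>i<n. f i = f (Suc i))"
  then have p: "\<forall>i<n. (f i, f (Suc i)) \<in> R \<and> f i \<noteq> f (Suc i)" using assms(2) by auto
  obtain c where c: "\<forall>(a, b)\<in>R. a \<noteq> b \<longrightarrow> pot c a < pot c b" using pot_exists[OF assms(1)] by blast
  have "n + pot c (f 0) \<le> pot c (f n)" by (rule path_bound[OF c p])
  then show False using pot_le[of c "f n"] assms(3) by auto
qed

lemma relpow_stable:
  assumes P: "Phi R"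
  shows "R ^^ 11 = R ^^ 10"
proof
  show "R ^^ 11 \<subseteq> R ^^ 10"
  proof
    fix p assume "p \<in> R ^^ 11"
    then obtain x y where p: "p = (x, y)" "(x, y) \<in> R ^^ 11" by (cases p) auto
    then obtain f where f: "f 0 = x" "f 11 = y" "\<forall>i<11. (f i, f (Suc i)) \<in> R"
      unfolding relpow_fun_conv by blast
    obtain i where i: "i < 11" "f i = f (Suc i)" using loop_step[OF P f(3)] by auto
    define g where "g j = (if j < i then f j else f (Suc j))" for j
    have "g 0 = x" using f i unfolding g_def by auto
    moreover have "g 10 = y" using f i unfolding g_def by auto
    moreover have "\<forall>j<10. (g j, g (Suc j)) \<in> R"
    proof (intro allI impI)
      fix j assume j: "j < (10::nat)"
      consider "Suc j < i" | "Suc j = i" | "i \<le> j" by linarith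
      then show "(g j, g (Suc j)) \<in> R"
      proof cases
        case 1 then show ?thesis using f j unfolding g_def by auto
      next
        case 2
        then have "g j = f j" "g (Suc j) = f (Suc j)" using i unfolding g_def by auto
        moreover have "(f j, f (Suc j)) \<in> R" using f j by auto
        ultimately show ?thesis by simp
      next
        case 3 then show ?thesis using f j unfolding g_def by auto
      qed
    qed
    ultimately show "p \<in> R ^^ 10" unfolding p relpow_fun_conv by blast
  qed
  show "R ^^ 10 \<subseteq> R ^^ 11"
  proof
    fix p assume "p \<in> R ^^ 10"
    then obtain x y where p: "p = (x, y)" "(x, y) \<in> R ^^ 10" by (cases p) auto
    then obtain f where f: "f 0 = x" "f 10 = y" "\<forall>i<10. (f i, f (Suc i)) \<in> R"
      unfolding relpow_fun_conv by blast
    obtain i where i: "i < 10" "f i = f (Suc i)" using loop_step[OF P f(3)] by auto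
    define g where "g j = (if j \<le> i then f j else f (j - 1))" for j
    have "g 0 = x" using f i unfolding g_def by auto
    moreover have "g 11 = y" using f i unfolding g_def by auto
    moreover have "\<forall>j<11. (g j, g (Suc j)) \<in> R"
    proof (intro allI impI)
      fix j assume j: "j < (11::nat)"
      consider "j < i" | "j = i" | "i < j" by linarith
      then show "(g j, g (Suc j)) \<in> R"
      proof cases
        case 1 then show ?thesis using f j i unfolding g_def by auto
      next
        case 2
        then have "g j = f i" "g (Suc j) = f i" unfolding g_def by auto
        moreover have "(f i, f (Suc i)) \<in> R" using f i by auto
        ultimately show ?thesis using i by simp
      next
        case 3
        then have "g j = f (j - 1)" "g (Suc j) = f j" unfolding g_def by auto
        moreover have "j - 1 < 10" "Suc (j - 1) = j" using j 3 by auto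
        ultimately show ?thesis using f by metis
      qed
    qed
    ultimately show "p \<in> R ^^ 11" unfolding p relpow_fun_conv by blast
  qed
qed

lemma cpow_Cat:
  assumes t: "(o1, o1, R) \<in> MT"
  shows "cpow Cat (enc (o1, o1, R)) n = enc (o1, o1, Id_on (St o1) O R ^^ n)
     \<and> (o1, o1, Id_on (St o1) O R ^^ n) \<in> MT"
proof (induction n)
  case 0
  have "o1 \<le> 3" using t unfolding MT_def by auto
  then show ?case using MT_Id by (simp add: Cat_simps)
next
  case (Suc n)
  have "(o1, o1, (Id_on (St o1) O R ^^ n) O R) \<in> MT" using MT_comp Suc.IH t by blast
  then show ?case using Suc.IH by (simp add: Cat_simps O_assoc relpow_commute)
qed

lemma aperiodic_Cat: "aperiodic_cat Cat 10"
  unfolding aperiodic_cat_def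
proof (intro ballI impI)
  fix x assume x: "x \<in> Mor Cat" "cdom Cat x = ccod Cat x"
  obtain a b R where t: "x = enc (a, b, R)" "(a, b, R) \<in> MT" using x(1) by (auto simp: Cat_simps)
  have "a = b" using x(2) t by (simp add: Cat_simps)
  then have t': "(a, a, R) \<in> MT" using t by simp
  have P: "Phi R" using t unfolding MT_def by auto
  show "cpow Cat x (10 + 1) = cpow Cat x 10"
    using cpow_Cat[OF t', of 11] cpow_Cat[OF t', of 10] relpow_stable[OF P] t \<open>a = b\<close> by simp
qed


section \<open>The functor\<close>

lemma St_big: "3 \<le> n \<Longrightarrow> St n = {}"
proof -
  have "ist s \<noteq> n" if "3 \<le> n" for s using ist_le2[of s] that by auto
  then show "3 \<le> n \<Longrightarrow> St n = {}" unfolding St_def by auto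
qed

lemma St_min: "St (min n 3) = St n"
  using St_big[of n] St_big[of 3] by (cases "n \<le> 3") (auto simp: min_def)

definition FoF :: "unit conclist \<Rightarrow> nat" where "FoF U = min (card (cl_car U)) 3"

definition FmF :: "unit ipomset \<Rightarrow> nat" where
  "FmF P = enc (min (card (psrc P)) 3, min (card (ptgt P)) 3, Read P)"

definition KK :: "nat set" where
  "KK = enc ` {(0, 0, R) | R. (0, 0, R) \<in> MT \<and> ((SB, SE) \<in> R \<or> R = Id_on (St 0))}"

lemma Fm_MT:
  assumes V: "is_ipomset P"
  shows "(min (card (psrc P)) 3, min (card (ptgt P)) 3, Read P) \<in> MT"
proof -
  have "Read P \<subseteq> St (min (card (psrc P)) 3) \<times> St (min (card (ptgt P)) 3)"
  proof
    fix p assume "p \<in> Read P"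
    then obtain a b where ab: "p = (a, b)" "(a, b) \<in> Read P" by (cases p) auto
    have "card (psrc P) = ist a" "card (ptgt P) = ist b" using Read_card[OF V ab(2)] by auto
    then show "p \<in> St (min (card (psrc P)) 3) \<times> St (min (card (ptgt P)) 3)"
      using ab St_min unfolding St_def by auto
  qed
  moreover have "Phi (Read P)" unfolding Phi_def using Read_rank Read_PhiM[OF V] by blast
  ultimately show ?thesis unfolding MT_def by auto
qed

lemma functor_FmF: "iiPoms_functor Cat FoF FmF"
  unfolding iiPoms_functor_def
proof (intro conjI allI impI)
  fix U V :: "unit conclist" assume a: "is_conclist U \<and> is_conclist V \<and> conclist_iso U V"
  then obtain f where "bij_betw f (cl_car U) (cl_car V)" unfolding conclist_iso_def by (elim exE conjE) (rule that, assumption+)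
  then have "card (cl_car U) = card (cl_car V)" by (rule bij_betw_same_card)
  then show "FoF U = FoF V" unfolding FoF_def by simp
next
  fix P Q :: "unit ipomset" assume a: "is_ipomset P \<and> is_ipomset Q \<and> ipomset_iso P Q"
  then obtain f where f: "bij_betw f (pcar P) (pcar Q)" "f ` psrc P = psrc Q" "f ` ptgt P = ptgt Q"
    unfolding ipomset_iso_def by (elim exE conjE) (rule that, assumption+)
  have sub: "psrc P \<subseteq> pcar P" "ptgt P \<subseteq> pcar P" using ipo(4,5) a by auto
  have "card (psrc Q) = card (psrc P)" "card (ptgt Q) = card (ptgt P)"
    using f sub by (metis bij_betw_def card_image inj_on_subset)+
  moreover have "Read P = Read Q" using Read_iso a by blast
  ultimately show "FmF P = FmF Q" unfolding FmF_def by simp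
next
  fix U :: "unit conclist" assume "is_conclist U"
  show "FoF U \<in> Ob Cat" unfolding FoF_def Cat_simps by auto
next
  fix P :: "unit ipomset" assume V: "is_ipomset P"
  show "FmF P \<in> Mor Cat" unfolding FmF_def Cat_simps using Fm_MT[OF V] by blast
  show "cdom Cat (FmF P) = FoF (src_cl P)" unfolding FmF_def FoF_def Cat_simps by (simp add: src_cl_def)
  show "ccod Cat (FmF P) = FoF (tgt_cl P)" unfolding FmF_def FoF_def Cat_simps by (simp add: tgt_cl_def)
next
  fix U :: "unit conclist" assume U: "is_conclist U"
  have "Read (id_pom U) = Id_on (St (min (card (cl_car U)) 3))" using Read_id[OF U] St_min by simp
  then show "FmF (id_pom U) = cid Cat (FoF U)" unfolding FmF_def FoF_def Cat_simps
    by (simp add: id_pom_def)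
next
  fix P Q R :: "unit ipomset" assume a: "is_ipomset P \<and> is_ipomset Q \<and> is_ipomset R \<and> is_gluing P Q R"
  then obtain i j where G: "glue P Q R i j" using is_gluing_glue by blast
  have VP: "is_ipomset P" and VQ: "is_ipomset Q" using a by auto
  have "Read R = Read P O Read Q" using Read_glue[OF G VP VQ] .
  moreover have "card (psrc R) = card (psrc P)"
    using G_basic(1,6)[OF G VP VQ] ipo(4)[OF VP] by (metis card_image inj_on_subset)
  moreover have "card (ptgt R) = card (ptgt Q)"
    using G_basic(2,7)[OF G VP VQ] ipo(5)[OF VQ] by (metis card_image inj_on_subset)
  ultimately show "FmF R = ccomp Cat (FmF P) (FmF Q)" unfolding FmF_def Cat_simps by simp
qed

lemma lang:
  assumes V: "is_ipomset P"
  shows "(\<exists>n. ipomset_iso P (P2n n)) \<longleftrightarrow> FmF P \<in> KK"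
proof
  assume "\<exists>n. ipomset_iso P (P2n n)"
  then obtain n where iso: "ipomset_iso P (P2n n)" by blast
  then obtain f where f: "bij_betw f (pcar P) (pcar (P2n n))" "f ` psrc P = psrc (P2n n)"
      "f ` ptgt P = ptgt (P2n n)"
    unfolding ipomset_iso_def by (elim exE conjE) (rule that, assumption+)
  have st: "psrc P = {}" "ptgt P = {}" using f(2,3) by (auto simp: P2n_def)
  show "FmF P \<in> KK"
  proof (cases "n = 0")
    case True
    then have "pcar P = {}" using f(1) by (simp add: P2n_def bij_betw_def)
    then have "Read P = Id_on (St 0)" using Read_empty[OF V] by simp
    then show ?thesis unfolding FmF_def KK_def using st Fm_MT[OF V] by auto
  next
    case False
    then have "rd (P2n n) SB 1 SE (2 * int n + 1) int" using rd_P2n by simp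
    then have "(SB, SE) \<in> Read (P2n n)" unfolding Read_def by blast
    then have "(SB, SE) \<in> Read P" using Read_iso[OF V iso] by simp
    then show ?thesis unfolding FmF_def KK_def using st Fm_MT[OF V] by auto
  qed
next
  assume "FmF P \<in> KK"
  then obtain R where R: "FmF P = enc (0, 0, R)" "(SB, SE) \<in> R \<or> R = Id_on (St 0)"
    unfolding KK_def by blast
  then have "Read P = R" unfolding FmF_def using inj_enc by (auto dest: injD)
  show "\<exists>n. ipomset_iso P (P2n n)"
  proof (cases "(SB, SE) \<in> R")
    case True
    then obtain k k' h where "rd P SB k SE k' h" using \<open>Read P = R\<close> unfolding Read_def by blast
    then show ?thesis by (rule rd_SBSE_iso)
  next
    case False
    then have "(SB, SB) \<in> R" using R(2) by (auto simp: St_def)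
    then obtain k k' h where "rd P SB k SB k' h" using \<open>Read P = R\<close> unfolding Read_def by blast
    then have "pcar P = {}" by (rule rd_SBSB_empty)
    then show ?thesis using empty_iso[OF V] by blast
  qed
qed

theorem mainTheorem10:
  shows "\<exists>C N K Fo Fm. finite_category C \<and> aperiodic_cat C N \<and> K \<subseteq> Mor C
     \<and> iiPoms_functor C (Fo :: unit conclist \<Rightarrow> nat) Fm
     \<and> (\<forall>P. is_ipomset P \<longrightarrow> ((\<exists>n. ipomset_iso P (P2n n)) \<longleftrightarrow> Fm P \<in> K))"
proof -
  have "KK \<subseteq> Mor Cat" unfolding KK_def Cat_simps by auto
  then show ?thesis using finite_Cat aperiodic_Cat functor_FmF lang by blast
qed

end
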